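(* Let $L$ be an infinite set and let $Q$ be either the edgeless cube $Q_L$ or the edged cube $\bar Q_L$. The quotient $\mathrm{UC}_L=\mathrm{uc}_L/{\sim}$, with the operation induced by concatenation, is a group containing $G_L$ (the finite basic sequences modulo $\sim$) as a subgroup. Furthermore, every element of $\mathrm{UC}_L$ has order at most $\operatorname{lcm}\{\text{order of }\pi:\pi\in S_{24}\}$.
   Context: Let $L$ be an infinite set, $-L=\{-r:r\in L\}$ a disjoint copy of $L$, and $0$ a new element; $L^\dagger=-L\cup\{0\}\cup L$ with $-(-r)=r$, $-0=0$. Adjoin $\pm\infty$ with $-(+\infty)=-\infty$ and set $\bar L^\dagger=L^\dagger\cup\{\pm\infty\}$. Points of $U=(\bar L^\dagger)^3$ have coordinates $x,y,z$. The edgeless cube $Q_L$ is the set of points of $U$ with exactly one coordinate in $\{\pm\infty\}$ (cells). The edged cube $\bar Q_L$ is the set of cells $(p,i)$ with $p\in U$, $i\in\{x,y,z\}$, $p_i\in\{\pm\infty\}$ ($i$ marks the face). For $i\in\{x,y,z\}$, $\alpha\in\bar L^\dagger$, the quarter-turn twist $T_{i,\alpha}$ is the permutation of cells fixing every cell whose point $p$ has $p_i\ne\alpha$ and acting on the others by $T_{x,\alpha}(\alpha,y,z)=(\alpha,-z,y)$, $T_{y,\alpha}(x,\alpha,z)=(z,\alpha,-x)$, $T_{z,\alpha}(x,y,\alpha)=(-y,x,\alpha)$ (in $\bar Q_L$ the marked coordinate is carried along by the rotation). Basic twists are $T,T^2,T^3$ for quarter-turn twists $T$. A basic sequence is a sequence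 $\langle\sigma_\eta:\eta<\theta\rangle$ of basic twists of ordinal length $\theta$. A labelling is a map $f$ from cells to $X\cup\{\mathrm{NaC}\}$ for a set $X\not\ni\mathrm{NaC}$; it is legal if it never takes value NaC; a configuration is a labelling with $X$ the six colors red, white, green, orange, yellow, blue. A twist $\sigma$ acts by $(\sigma f)(c)=f(\sigma^{-1}c)$. Applying $\vec\sigma=\langle\sigma_\eta:\eta<\theta\rangle$ to $f_0$ produces $f_{\eta+1}=\sigma_\eta f_\eta$, and for limit $\lambda\le\theta$, $f_\lambda(c)$ is the eventually constant value of $f_\eta(c)$ ($\eta<\lambda$) if it exists and NaC otherwise; the terminal labelling is $\vec\sigma f_0$. $\vec\sigma$ is universally convergent if $\vec\sigma\,\mathrm{id}$ is legal, where $\mathrm{id}$ labels each cell by itself. $\vec\sigma\sim\vec\tau$ means $\vec\sigma f=\vec\tau f$ for every configuration $f$. $\mathrm{uc}_L$ is the set of universally convergent basic sequences with concatenation ($\vec\tau\vec\sigma$ means $\vec\sigma$ followed by $\vec\tau$), and $G_L$ is the set of finite basic sequences modulo $\sim$. *)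

theory Defs
  imports Main "HOL-Algebra.Multiplicative_Group" "HOL-Combinatorics.Permutations"
begin

section \<open>Coordinates: the set L-dagger-bar, with L given as a type 'a\<close>

datatype 'a ext = Neg 'a | Zero | Pos 'a | NInf | PInf

fun eneg :: "'a ext \<Rightarrow> 'a ext" where
  "eneg (Neg r) = Pos r"
| "eneg (Pos r) = Neg r"
| "eneg Zero = Zero"
| "eneg NInf = PInf"
| "eneg PInf = NInf"

definition is_inf :: "'a ext \<Rightarrow> bool" where
  "is_inf a \<longleftrightarrow> a = NInf \<or> a = PInf"

datatype axis = AX | AY | AZ

type_synonym 'a point = "'a ext \<times> 'a ext \<times> 'a ext"

fun coord :: "'a point \<Rightarrow> axis \<Rightarrow> 'a ext" where
  "coord (x, y, z) AX = x"
| "coord (x, y, z) AY = y"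
| "coord (x, y, z) AZ = z"

fun qturn_pt :: "axis \<Rightarrow> 'a ext \<Rightarrow> 'a point \<Rightarrow> 'a point" where
  "qturn_pt AX \<alpha> (x, y, z) = (if x \<noteq> \<alpha> then (x, y, z) else (\<alpha>, eneg z, y))"
| "qturn_pt AY \<alpha> (x, y, z) = (if y \<noteq> \<alpha> then (x, y, z) else (z, \<alpha>, eneg x))"
| "qturn_pt AZ \<alpha> (x, y, z) = (if z \<noteq> \<alpha> then (x, y, z) else (eneg y, x, \<alpha>))"

text \<open>How the rotation about axis i moves a marked coordinate axis j.\<close>
fun carry_axis :: "axis \<Rightarrow> axis \<Rightarrow> axis" where
  "carry_axis AX AX = AX" | "carry_axis AX AY = AZ" | "carry_axis AX AZ = AY"
| "carry_axis AY AX = AZ" | "carry_axis AY AY = AY" | "carry_axis AY AZ = AX"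
| "carry_axis AZ AX = AY" | "carry_axis AZ AY = AX" | "carry_axis AZ AZ = AZ"

text \<open>Quarter-turn twist acting on edged cells (p,j): the marked coordinate is carried along.\<close>
definition qturn_edged :: "axis \<Rightarrow> 'a ext \<Rightarrow> 'a point \<times> axis \<Rightarrow> 'a point \<times> axis" where
  "qturn_edged i \<alpha> c = (case c of (p, j) \<Rightarrow>
     (if coord p i \<noteq> \<alpha> then (p, j) else (qturn_pt i \<alpha> p, carry_axis i j)))"

definition edgeless_cells :: "'a point set" where
  "edgeless_cells = {p. card {i. is_inf (coord p i)} = 1}"

definition edged_cells :: "('a point \<times> axis) set" where
  "edged_cells = {(p, i). is_inf (coord p i)}"

text \<open>A twist (i, alpha, k) stands for (T_{i,alpha})^k; it is basic when k is 1, 2 or 3.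
  The argument qt is the quarter-turn action of the cube under consideration.\<close>
type_synonym 'a twist = "axis \<times> 'a ext \<times> nat"

definition tw_perm :: "(axis \<Rightarrow> 'a ext \<Rightarrow> 'c \<Rightarrow> 'c) \<Rightarrow> 'a twist \<Rightarrow> 'c \<Rightarrow> 'c" where
  "tw_perm qt t = (case t of (i, \<alpha>, k) \<Rightarrow> (qt i \<alpha>) ^^ k)"

definition basic_twist :: "'a twist \<Rightarrow> bool" where
  "basic_twist t \<longleftrightarrow> (case t of (i, \<alpha>, k) \<Rightarrow> k \<in> {1, 2, 3})"

text \<open>A sequence of ordinal length: the ordinal is represented by a well-order r
  (on the index set Field r, a subset of the index type 'i), with entries s.\<close>
type_synonym ('i, 'a) bseq = "'i rel \<times> ('i \<Rightarrow> 'a twist)"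

definition is_bseq :: "('i, 'a) bseq \<Rightarrow> bool" where
  "is_bseq sq \<longleftrightarrow> Well_order (fst sq) \<and> (\<forall>\<eta>\<in>Field (fst sq). basic_twist (snd sq \<eta>))"

text \<open>Labellings: None plays the role of NaC.\<close>
definition act :: "('c \<Rightarrow> 'c) \<Rightarrow> ('c \<Rightarrow> 'x option) \<Rightarrow> 'c \<Rightarrow> 'x option" where
  "act \<pi> f = (\<lambda>c. f (inv_into UNIV \<pi> c))"

text \<open>Stages of a run: Some eta is the stage just before applying the eta-th twist,
  None is the terminal stage theta.\<close>
definition stage_rel :: "'i rel \<Rightarrow> ('i option) rel" where
  "stage_rel r = {(Some a, Some b) | a b. (a, b) \<in> r \<and> a \<noteq> b} \<union> {(Some a, None) | a. a \<in> Field r}"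

definition preds :: "'i rel \<Rightarrow> 'i option \<Rightarrow> 'i set" where
  "preds r \<eta> = {\<xi>. (Some \<xi>, \<eta>) \<in> stage_rel r}"

definition run_step :: "(axis \<Rightarrow> 'a ext \<Rightarrow> 'c \<Rightarrow> 'c) \<Rightarrow> ('i, 'a) bseq \<Rightarrow> ('c \<Rightarrow> 'x option)
    \<Rightarrow> ('i option \<Rightarrow> 'c \<Rightarrow> 'x option) \<Rightarrow> 'i option \<Rightarrow> 'c \<Rightarrow> 'x option" where
  "run_step qt sq f0 F \<eta> =
    (let r = fst sq; s = snd sq; P = preds r \<eta> in
     if P = {} then f0
     else if (\<exists>\<mu>\<in>P. \<forall>\<xi>\<in>P. (\<xi>, \<mu>) \<in> r) then
       (let \<mu> = (THE \<mu>. \<mu> \<in> P \<and> (\<forall>\<xi>\<in>P. (\<xi>, \<mu>) \<in> r)) in act (tw_perm qt (s \<mu>)) (F (Some \<mu>)))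
     else (\<lambda>c. if (\<exists>\<xi>\<in>P. \<forall>\<zeta>\<in>P. (\<xi>, \<zeta>) \<in> r \<longrightarrow> F (Some \<zeta>) c = F (Some \<xi>) c)
               then F (Some (SOME \<xi>. \<xi> \<in> P \<and> (\<forall>\<zeta>\<in>P. (\<xi>, \<zeta>) \<in> r \<longrightarrow> F (Some \<zeta>) c = F (Some \<xi>) c))) c
               else None))"

definition run :: "(axis \<Rightarrow> 'a ext \<Rightarrow> 'c \<Rightarrow> 'c) \<Rightarrow> ('i, 'a) bseq \<Rightarrow> ('c \<Rightarrow> 'x option)
    \<Rightarrow> 'i option \<Rightarrow> 'c \<Rightarrow> 'x option" where
  "run qt sq f0 = wfrec (stage_rel (fst sq)) (run_step qt sq f0)"

definition apply_seq :: "(axis \<Rightarrow> 'a ext \<Rightarrow> 'c \<Rightarrow> 'c) \<Rightarrow> ('i, 'a) bseq \<Rightarrow> ('c \<Rightarrow> 'x option) \<Rightarrow> 'c \<Rightarrow> 'x option" where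
  "apply_seq qt sq f0 = run qt sq f0 None"

definition legal :: "'c set \<Rightarrow> ('c \<Rightarrow> 'x option) \<Rightarrow> bool" where
  "legal cells f \<longleftrightarrow> (\<forall>c\<in>cells. f c \<noteq> None)"

definition uc :: "(axis \<Rightarrow> 'a ext \<Rightarrow> 'c \<Rightarrow> 'c) \<Rightarrow> 'c set \<Rightarrow> ('i, 'a) bseq set" where
  "uc qt cells = {sq. is_bseq sq \<and> legal cells (apply_seq qt sq (\<lambda>c. Some c))}"

datatype color = Red | White | Green | Orange | Yellow | Blue

definition seq_equiv :: "(axis \<Rightarrow> 'a ext \<Rightarrow> 'c \<Rightarrow> 'c) \<Rightarrow> 'c set \<Rightarrow> ('i, 'a) bseq \<Rightarrow> ('i, 'a) bseq \<Rightarrow> bool" where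
  "seq_equiv qt cells sq sq' \<longleftrightarrow>
     (\<forall>f :: 'c \<Rightarrow> color option. \<forall>c\<in>cells. apply_seq qt sq f c = apply_seq qt sq' f c)"

definition sum_rel :: "'i rel \<Rightarrow> 'i rel \<Rightarrow> ('i + 'i) rel" where
  "sum_rel r1 r2 = {(Inl a, Inl b) | a b. (a, b) \<in> r1} \<union> {(Inr a, Inr b) | a b. (a, b) \<in> r2}
                 \<union> {(Inl a, Inr b) | a b. a \<in> Field r1 \<and> b \<in> Field r2}"

text \<open>A fixed injection of 'i + 'i into 'i (exists as 'i is infinite).\<close>
definition emb :: "'i + 'i \<Rightarrow> 'i" where
  "emb = (SOME h. inj h)"

text \<open>seq_then sq1 sq2: first sq1, then sq2 (in the paper's notation: sq2 sq1).\<close>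
definition seq_then :: "('i, 'a) bseq \<Rightarrow> ('i, 'a) bseq \<Rightarrow> ('i, 'a) bseq" where
  "seq_then sq1 sq2 =
    (map_prod emb emb ` sum_rel (fst sq1) (fst sq2),
     \<lambda>\<eta>. case inv_into UNIV emb \<eta> of Inl a \<Rightarrow> snd sq1 a | Inr b \<Rightarrow> snd sq2 b)"

definition empty_seq :: "('i, 'a) bseq" where
  "empty_seq = ({}, \<lambda>_. (AX, Zero, 1))"

definition uc_rel :: "(axis \<Rightarrow> 'a ext \<Rightarrow> 'c \<Rightarrow> 'c) \<Rightarrow> 'c set \<Rightarrow> ('i, 'a) bseq rel" where
  "uc_rel qt cells = {(sq, sq'). sq \<in> uc qt cells \<and> sq' \<in> uc qt cells \<and> seq_equiv qt cells sq sq'}"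

text \<open>Product X * Y = class of (rep Y followed by rep X), i.e. [tau][sigma] = [tau sigma].\<close>
definition UC :: "(axis \<Rightarrow> 'a ext \<Rightarrow> 'c \<Rightarrow> 'c) \<Rightarrow> 'c set \<Rightarrow> ('i, 'a) bseq set monoid" where
  "UC qt cells =
    \<lparr> carrier = uc qt cells // uc_rel qt cells,
      monoid.mult = (\<lambda>X Y. {\<rho> \<in> uc qt cells. \<exists>\<tau>\<in>X. \<exists>\<sigma>\<in>Y. seq_equiv qt cells \<rho> (seq_then \<sigma> \<tau>)}),
      monoid.one = {\<rho> \<in> uc qt cells. seq_equiv qt cells \<rho> empty_seq} \<rparr>"

definition GL_in_UC :: "(axis \<Rightarrow> 'a ext \<Rightarrow> 'c \<Rightarrow> 'c) \<Rightarrow> 'c set \<Rightarrow> ('i, 'a) bseq set set" where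
  "GL_in_UC qt cells = {X \<in> carrier (UC qt cells). \<exists>sq\<in>X. finite (Field (fst sq))}"

definition perm_order :: "(nat \<Rightarrow> nat) \<Rightarrow> nat" where
  "perm_order \<pi> = (LEAST k. 0 < k \<and> \<pi> ^^ k = id)"

definition S24_exponent :: nat where
  "S24_exponent = Lcm {perm_order \<pi> | \<pi>. \<pi> permutes {..<24::nat}}"

definition UC_claim :: "(axis \<Rightarrow> 'a ext \<Rightarrow> 'c \<Rightarrow> 'c) \<Rightarrow> 'c set \<Rightarrow> 'i itself \<Rightarrow> bool" where
  "UC_claim qt cells (_ :: 'i itself) \<longleftrightarrow>
     \<comment> \<open>concatenation of universally convergent sequences is universally convergent\<close>
     (\<forall>\<sigma> \<tau>. \<sigma> \<in> (uc qt cells :: ('i, 'a) bseq set) \<longrightarrow> \<tau> \<in> uc qt cells \<longrightarrow> seq_then \<sigma> \<tau> \<in> uc qt cells)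
     \<comment> \<open>the operation on classes induced by concatenation is well defined\<close>
   \<and> (\<forall>\<sigma> \<sigma>' \<tau> \<tau>'. \<sigma> \<in> (uc qt cells :: ('i, 'a) bseq set) \<longrightarrow> \<sigma>' \<in> uc qt cells \<longrightarrow>
        \<tau> \<in> uc qt cells \<longrightarrow> \<tau>' \<in> uc qt cells \<longrightarrow>
        seq_equiv qt cells \<sigma> \<sigma>' \<longrightarrow> seq_equiv qt cells \<tau> \<tau>' \<longrightarrow>
        seq_equiv qt cells (seq_then \<sigma> \<tau>) (seq_then \<sigma>' \<tau>'))
     \<comment> \<open>UC_L is a group with G_L as a subgroup\<close>
   \<and> group (UC qt cells :: ('i, 'a) bseq set monoid)
   \<and> subgroup (GL_in_UC qt cells) (UC qt cells :: ('i, 'a) bseq set monoid)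
     \<comment> \<open>every element has (finite) order at most lcm of orders in S_24\<close>
   \<and> (\<forall>X \<in> carrier (UC qt cells :: ('i, 'a) bseq set monoid).
        0 < group.ord (UC qt cells) X \<and> group.ord (UC qt cells) X \<le> S24_exponent)"

end

theory Submission
  imports Defs "HOL-Combinatorics.Cycles"
begin


lemma wo_refl: "Well_order r \<Longrightarrow> a \<in> Field r \<Longrightarrow> (a,a) \<in> r"
  unfolding well_order_on_def linear_order_on_def partial_order_on_def preorder_on_def refl_on_def by blast
lemma wo_trans: "Well_order r \<Longrightarrow> (a,b) \<in> r \<Longrightarrow> (b,c) \<in> r \<Longrightarrow> (a,c) \<in> r"
  unfolding well_order_on_def linear_order_on_def partial_order_on_def preorder_on_def trans_def by blast
lemma wo_antisym: "Well_order r \<Longrightarrow> (a,b) \<in> r \<Longrightarrow> (b,a) \<in> r \<Longrightarrow> a = b"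
  unfolding well_order_on_def linear_order_on_def partial_order_on_def antisym_def by blast
lemma wo_total: assumes "Well_order r" "a \<in> Field r" "b \<in> Field r" shows "(a,b) \<in> r \<or> (b,a) \<in> r"
proof (cases "a = b")
  case True then show ?thesis using wo_refl assms by metis
next
  case False then show ?thesis
    by (metis (no_types) assms linear_order_on_def total_on_def well_order_on_def)
qed

lemma preds_Some: "preds r (Some b) = {a. (a,b) \<in> r \<and> a \<noteq> b}"
  unfolding preds_def stage_rel_def by auto
lemma preds_None: "preds r None = Field r"
  unfolding preds_def stage_rel_def by auto
lemma preds_Field: "preds r \<eta> \<subseteq> Field r"
  unfolding preds_def stage_rel_def by (auto intro: FieldI1)
lemma preds_stage: "\<xi> \<in> preds r \<eta> \<Longrightarrow> (Some \<xi>, \<eta>) \<in> stage_rel r"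
  unfolding preds_def by auto

lemma wf_stage: assumes "Well_order r" shows "wf (stage_rel r)"
proof -
  have w: "wf (r - Id)" using assms unfolding well_order_on_def by blast
  have e: "stage_rel r = map_prod Some Some ` (r - Id) \<union> {(Some a, None) | a. a \<in> Field r}"
    unfolding stage_rel_def by auto
  have w1: "wf (map_prod Some Some ` (r - Id))" by (rule wf_map_prod_image[OF w]) (simp add: inj_def)
  have w2: "wf {(Some a, None :: 'a option) | a. a \<in> Field r}"
    by (rule wfI_min) auto
  show ?thesis unfolding e
    by (rule wf_Un[OF w1 w2]) auto
qed

definition lim_ok :: "'i set \<Rightarrow> 'i rel \<Rightarrow> ('i option \<Rightarrow> 'c \<Rightarrow> 'x option) \<Rightarrow> 'c \<Rightarrow> 'i \<Rightarrow> bool" where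
  "lim_ok P r F c \<xi> \<longleftrightarrow> \<xi> \<in> P \<and> (\<forall>\<zeta>\<in>P. (\<xi>, \<zeta>) \<in> r \<longrightarrow> F (Some \<zeta>) c = F (Some \<xi>) c)"

lemma lim_ok_eta: "lim_ok P r F c = (\<lambda>\<xi>. \<xi> \<in> P \<and> (\<forall>\<zeta>\<in>P. (\<xi>, \<zeta>) \<in> r \<longrightarrow> F (Some \<zeta>) c = F (Some \<xi>) c))"
  by (rule ext) (simp add: lim_ok_def)

lemma run_step_empty: "preds (fst sq) \<eta> = {} \<Longrightarrow> run_step qt sq f0 F \<eta> = f0"
  unfolding run_step_def by (simp add: Let_def)

lemma run_step_max:
  assumes "Well_order (fst sq)" "\<mu> \<in> preds (fst sq) \<eta>" "\<forall>\<xi>\<in>preds (fst sq) \<eta>. (\<xi>, \<mu>) \<in> fst sq"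
  shows "run_step qt sq f0 F \<eta> = act (tw_perm qt (snd sq \<mu>)) (F (Some \<mu>))"
proof -
  let ?P = "preds (fst sq) \<eta>"
  have "(THE \<mu>. \<mu> \<in> ?P \<and> (\<forall>\<xi>\<in>?P. (\<xi>, \<mu>) \<in> fst sq)) = \<mu>"
    using assms wo_antisym[OF assms(1)] by (intro the_equality) auto
  then show ?thesis using assms unfolding run_step_def by (auto simp: Let_def)
qed

lemma lim_ok_val:
  assumes "Well_order r" "P \<subseteq> Field r" "lim_ok P r F c a" "lim_ok P r F c b"
  shows "F (Some a) c = F (Some b) c"
  using assms wo_total[OF assms(1), of a b] unfolding lim_ok_def by (metis subsetD)

lemma run_step_lim:
  assumes "Well_order (fst sq)" "preds (fst sq) \<eta> \<noteq> {}"
    "\<not> (\<exists>\<mu>\<in>preds (fst sq) \<eta>. \<forall>\<xi>\<in>preds (fst sq) \<eta>. (\<xi>, \<mu>) \<in> fst sq)"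
  shows "run_step qt sq f0 F \<eta> c = (if \<exists>\<xi>. lim_ok (preds (fst sq) \<eta>) (fst sq) F c \<xi>
     then F (Some (SOME \<xi>. lim_ok (preds (fst sq) \<eta>) (fst sq) F c \<xi>)) c else None)"
  unfolding run_step_def Let_def
  apply (subst if_not_P[OF assms(2)], subst if_not_P[OF assms(3)])
  apply (simp only: lim_ok_eta Bex_def)
  done

lemma run_step_lim_val:
  assumes "Well_order (fst sq)" "preds (fst sq) \<eta> \<noteq> {}"
    "\<not> (\<exists>\<mu>\<in>preds (fst sq) \<eta>. \<forall>\<xi>\<in>preds (fst sq) \<eta>. (\<xi>, \<mu>) \<in> fst sq)"
    "lim_ok (preds (fst sq) \<eta>) (fst sq) F c \<xi>"
  shows "run_step qt sq f0 F \<eta> c = F (Some \<xi>) c"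
proof -
  let ?s = "SOME \<xi>. lim_ok (preds (fst sq) \<eta>) (fst sq) F c \<xi>"
  have "lim_ok (preds (fst sq) \<eta>) (fst sq) F c ?s" using assms(4) by (rule someI)
  then show ?thesis using run_step_lim[OF assms(1-3)] assms(4)
    lim_ok_val[OF assms(1) preds_Field] by metis
qed

lemma run_step_lim_Some:
  assumes "Well_order (fst sq)" "preds (fst sq) \<eta> \<noteq> {}"
    "\<not> (\<exists>\<mu>\<in>preds (fst sq) \<eta>. \<forall>\<xi>\<in>preds (fst sq) \<eta>. (\<xi>, \<mu>) \<in> fst sq)"
    "run_step qt sq f0 F \<eta> c = Some v"
  shows "\<exists>\<xi>. lim_ok (preds (fst sq) \<eta>) (fst sq) F c \<xi> \<and> F (Some \<xi>) c = Some v"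
  using assms run_step_lim_val[OF assms(1-3)] run_step_lim[OF assms(1-3)]
  by (metis option.distinct(1))

lemma run_step_cong:
  assumes "Well_order (fst sq)" "\<And>\<mu>. \<mu> \<in> preds (fst sq) \<eta> \<Longrightarrow> F (Some \<mu>) = F' (Some \<mu>)"
  shows "run_step qt sq f0 F \<eta> = run_step qt sq f0 F' \<eta>"
proof -
  let ?P = "preds (fst sq) \<eta>"
  consider "?P = {}" | \<mu> where "\<mu> \<in> ?P" "\<forall>\<xi>\<in>?P. (\<xi>, \<mu>) \<in> fst sq"
    | "?P \<noteq> {}" "\<not> (\<exists>\<mu>\<in>?P. \<forall>\<xi>\<in>?P. (\<xi>, \<mu>) \<in> fst sq)" by blast
  then show ?thesis
  proof cases
    case 1 then show ?thesis by (simp add: run_step_empty)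
  next
    case 2 then show ?thesis using assms by (simp add: run_step_max)
  next
    case 3
    have e: "lim_ok ?P (fst sq) F c = lim_ok ?P (fst sq) F' c" for c
      using assms(2) unfolding lim_ok_def by (auto intro!: ext)
    have f: "F (Some (SOME \<xi>. lim_ok ?P (fst sq) F' c \<xi>)) c = F' (Some (SOME \<xi>. lim_ok ?P (fst sq) F' c \<xi>)) c"
      if "\<exists>\<xi>. lim_ok ?P (fst sq) F' c \<xi>" for c
      using someI_ex[OF that] assms(2) unfolding lim_ok_def by auto
    show ?thesis
      by (rule ext) (simp add: run_step_lim[OF assms(1) 3] e f)
  qed
qed

lemma run_unfold:
  assumes "Well_order (fst sq)"
  shows "run qt sq f \<eta> = run_step qt sq f (run qt sq f) \<eta>"
proof -
  have "run qt sq f \<eta> = run_step qt sq f (cut (run qt sq f) (stage_rel (fst sq)) \<eta>) \<eta>"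
    unfolding run_def by (rule wfrec[OF wf_stage[OF assms]])
  also have "\<dots> = run_step qt sq f (run qt sq f) \<eta>"
    by (rule run_step_cong[OF assms]) (simp add: cut_apply preds_stage)
  finally show ?thesis .
qed


section \<open>Transport of run steps\<close>

lemma run_step_transport:
  assumes wo: "Well_order (fst sq)" and wo': "Well_order (fst sq')"
    and ne: "preds (fst sq') \<eta>' \<noteq> {}"
    and img: "h ` preds (fst sq') \<eta>' \<subseteq> preds (fst sq) \<eta>"
    and ord: "\<And>\<xi> \<zeta>. \<xi> \<in> preds (fst sq') \<eta>' \<Longrightarrow> \<zeta> \<in> preds (fst sq') \<eta>' \<Longrightarrow>
               (h \<xi>, h \<zeta>) \<in> fst sq \<longleftrightarrow> (\<xi>, \<zeta>) \<in> fst sq'"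
    and cof: "\<And>\<xi>. \<xi> \<in> preds (fst sq) \<eta> \<Longrightarrow> \<exists>\<mu>\<in>preds (fst sq') \<eta>'. (\<xi>, h \<mu>) \<in> fst sq"
    and up: "\<And>\<mu> \<zeta>. \<mu> \<in> preds (fst sq') \<eta>' \<Longrightarrow> \<zeta> \<in> preds (fst sq) \<eta> \<Longrightarrow> (h \<mu>, \<zeta>) \<in> fst sq
               \<Longrightarrow> \<zeta> \<in> h ` preds (fst sq') \<eta>'"
    and sv: "\<And>\<mu>. \<mu> \<in> preds (fst sq') \<eta>' \<Longrightarrow> snd sq (h \<mu>) = snd sq' \<mu>"
    and Fv: "\<And>\<mu>. \<mu> \<in> preds (fst sq') \<eta>' \<Longrightarrow> F (Some (h \<mu>)) = F' (Some \<mu>)"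
  shows "run_step qt sq f0 F \<eta> = run_step qt sq' f0' F' \<eta>'"
proof -
  let ?P = "preds (fst sq) \<eta>" and ?P' = "preds (fst sq') \<eta>'"
  let ?r = "fst sq" and ?r' = "fst sq'"
  have PF: "?P \<subseteq> Field ?r" and PF': "?P' \<subseteq> Field ?r'" by (rule preds_Field)+
  have neP: "?P \<noteq> {}" using ne img by blast
  show ?thesis
  proof (cases "\<exists>\<mu>\<in>?P'. \<forall>\<xi>\<in>?P'. (\<xi>, \<mu>) \<in> ?r'")
    case True
    then obtain \<mu> where \<mu>: "\<mu> \<in> ?P'" "\<forall>\<xi>\<in>?P'. (\<xi>, \<mu>) \<in> ?r'" by blast
    have hm: "h \<mu> \<in> ?P" using \<mu> img by blast
    have mx: "\<forall>\<xi>\<in>?P. (\<xi>, h \<mu>) \<in> ?r"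
    proof
      fix \<xi> assume "\<xi> \<in> ?P"
      then obtain \<nu> where \<nu>: "\<nu> \<in> ?P'" "(\<xi>, h \<nu>) \<in> ?r" using cof by blast
      have "(h \<nu>, h \<mu>) \<in> ?r" using ord[OF \<nu>(1) \<mu>(1)] \<mu>(2) \<nu>(1) by blast
      then show "(\<xi>, h \<mu>) \<in> ?r" using wo_trans[OF wo \<nu>(2)] by blast
    qed
    show ?thesis using run_step_max[OF wo hm mx, of qt f0 F] run_step_max[OF wo' \<mu>, of qt f0' F'] sv[OF \<mu>(1)] Fv[OF \<mu>(1)]
      by simp
  next
    case False
    have noP: "\<not> (\<exists>\<mu>\<in>?P. \<forall>\<xi>\<in>?P. (\<xi>, \<mu>) \<in> ?r)"
    proof
      assume "\<exists>\<mu>\<in>?P. \<forall>\<xi>\<in>?P. (\<xi>, \<mu>) \<in> ?r"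
      then obtain \<mu> where \<mu>: "\<mu> \<in> ?P" "\<forall>\<xi>\<in>?P. (\<xi>, \<mu>) \<in> ?r" by blast
      obtain \<nu> where \<nu>: "\<nu> \<in> ?P'" "(\<mu>, h \<nu>) \<in> ?r" using cof[OF \<mu>(1)] by blast
      have "h \<nu> \<in> ?P" using \<nu>(1) img by blast
      then have "h \<nu> = \<mu>" using wo_antisym[OF wo \<nu>(2)] \<mu>(2) by blast
      then have "\<forall>\<xi>\<in>?P'. (\<xi>, \<nu>) \<in> ?r'" using ord \<nu>(1) \<mu>(2) img by blast
      then show False using False \<nu>(1) by blast
    qed
    show ?thesis
    proof (rule ext)
      fix c
      show "run_step qt sq f0 F \<eta> c = run_step qt sq' f0' F' \<eta>' c"
      proof (cases "\<exists>\<xi>'. lim_ok ?P' ?r' F' c \<xi>'")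
        case True
        then obtain \<xi>' where \<xi>': "lim_ok ?P' ?r' F' c \<xi>'" by blast
        have \<xi>'P: "\<xi>' \<in> ?P'" using \<xi>' lim_ok_def by metis
        have "lim_ok ?P ?r F c (h \<xi>')"
          unfolding lim_ok_def
        proof (intro conjI ballI impI)
          show "h \<xi>' \<in> ?P" using \<xi>'P img by blast
          fix \<zeta> assume z: "\<zeta> \<in> ?P" "(h \<xi>', \<zeta>) \<in> ?r"
          then obtain \<mu> where \<mu>: "\<mu> \<in> ?P'" "\<zeta> = h \<mu>" using up[OF \<xi>'P] by blast
          have "(\<xi>', \<mu>) \<in> ?r'" using ord[OF \<xi>'P \<mu>(1)] z \<mu> by blast
          then have "F' (Some \<mu>) c = F' (Some \<xi>') c" using \<xi>' \<mu>(1) unfolding lim_ok_def by blast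
          then show "F (Some \<zeta>) c = F (Some (h \<xi>')) c" using Fv \<mu> \<xi>'P by simp
        qed
        then have "run_step qt sq f0 F \<eta> c = F (Some (h \<xi>')) c"
          by (rule run_step_lim_val[OF wo neP noP])
        also have "\<dots> = F' (Some \<xi>') c" using Fv[OF \<xi>'P] by simp
        also have "\<dots> = run_step qt sq' f0' F' \<eta>' c"
          by (rule run_step_lim_val[OF wo' ne False \<xi>', symmetric])
        finally show ?thesis .
      next
        case False2: False
        have "\<not> (\<exists>\<xi>. lim_ok ?P ?r F c \<xi>)"
        proof
          assume "\<exists>\<xi>. lim_ok ?P ?r F c \<xi>"
          then obtain \<xi> where \<xi>: "lim_ok ?P ?r F c \<xi>" by blast
          then have \<xi>P: "\<xi> \<in> ?P" using lim_ok_def by metis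
          obtain \<mu>0 where \<mu>0: "\<mu>0 \<in> ?P'" "(\<xi>, h \<mu>0) \<in> ?r" using cof[OF \<xi>P] by blast
          have "lim_ok ?P' ?r' F' c \<mu>0"
            unfolding lim_ok_def
          proof (intro conjI ballI impI)
            show "\<mu>0 \<in> ?P'" by (rule \<mu>0(1))
            fix \<zeta> assume z: "\<zeta> \<in> ?P'" "(\<mu>0, \<zeta>) \<in> ?r'"
            have "(h \<mu>0, h \<zeta>) \<in> ?r" using ord[OF \<mu>0(1) z(1)] z(2) by blast
            then have "(\<xi>, h \<zeta>) \<in> ?r" using wo_trans[OF wo \<mu>0(2)] by blast
            moreover have "h \<zeta> \<in> ?P" "h \<mu>0 \<in> ?P" using z(1) \<mu>0(1) img by blast+
            ultimately have "F (Some (h \<zeta>)) c = F (Some \<xi>) c" "F (Some (h \<mu>0)) c = F (Some \<xi>) c"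
              using \<xi> \<mu>0(2) unfolding lim_ok_def by blast+
            then show "F' (Some \<zeta>) c = F' (Some \<mu>0) c" using Fv z(1) \<mu>0(1) by simp
          qed
          then show False using False2 by blast
        qed
        then show ?thesis
          using run_step_lim[OF wo neP noP, of qt f0 F c] run_step_lim[OF wo' ne False, of qt f0' F' c] False2 by simp
      qed
    qed
  qed
qed

section \<open>Reachability and the generic cube locale\<close>

inductive reach :: "(axis \<Rightarrow> 'a ext \<Rightarrow> 'c \<Rightarrow> 'c) \<Rightarrow> 'c \<Rightarrow> 'c \<Rightarrow> bool" for qt where
  reach_refl: "reach qt c c"
| reach_step: "reach qt c d \<Longrightarrow> reach qt c (qt i \<alpha> d)"

lemma reach_funpow: "reach qt c d \<Longrightarrow> reach qt c ((qt i \<alpha> ^^ k) d)"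
  by (induction k) (auto intro: reach_step)

lemma reach_tw: "reach qt c d \<Longrightarrow> reach qt c (tw_perm qt t d)"
  unfolding tw_perm_def by (cases t) (auto intro: reach_funpow)

lemma reach_trans: "reach qt d e \<Longrightarrow> reach qt c d \<Longrightarrow> reach qt c e"
  by (induction rule: reach.induct) (auto intro: reach_step)

locale cube =
  fixes qt :: "axis \<Rightarrow> 'a ext \<Rightarrow> 'c \<Rightarrow> 'c" and cells :: "'c set"
  assumes qt4: "(qt i \<alpha> ^^ 4) x = x"
    and cells_qt: "x \<in> cells \<Longrightarrow> qt i \<alpha> x \<in> cells"
    and orbit_fin: "finite {d. reach qt c d}"
    and orbit_card: "card {d. reach qt c d} \<le> 24"
begin

lemma bij_qt: "bij (qt i \<alpha>)"
proof -
  have a: "qt i \<alpha> \<circ> (qt i \<alpha> ^^ 3) = id" using qt4[of i \<alpha>]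
    by (intro ext) (simp add: numeral_eq_Suc funpow_Suc_right del: funpow.simps)
  have b: "(qt i \<alpha> ^^ 3) \<circ> qt i \<alpha> = id" using qt4[of i \<alpha>]
    by (intro ext) (simp add: numeral_eq_Suc funpow_Suc_right del: funpow.simps)
  show ?thesis using o_bij[OF b a] .
qed

lemma bij_tw: "bij (tw_perm qt t)"
  unfolding tw_perm_def by (cases t) (simp add: bij_qt)

lemma reach_sym: "reach qt c d \<Longrightarrow> reach qt d c"
proof (induction rule: reach.induct)
  case (reach_refl c) then show ?case by (rule reach.reach_refl)
next
  case (reach_step c d i \<alpha>)
  have "reach qt (qt i \<alpha> d) ((qt i \<alpha> ^^ 3) (qt i \<alpha> d))"
    by (rule reach_funpow[OF reach.reach_refl])
  moreover have "(qt i \<alpha> ^^ 3) (qt i \<alpha> d) = d" using qt4[of i \<alpha> d]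
    by (simp add: numeral_eq_Suc funpow_Suc_right del: funpow.simps)
  ultimately show ?case using reach_trans reach_step.IH by metis
qed

lemma reach_cells: "reach qt c d \<Longrightarrow> c \<in> cells \<Longrightarrow> d \<in> cells"
  by (induction rule: reach.induct) (auto intro: cells_qt)

lemma act_apply: "act \<pi> F x = F (inv_into UNIV \<pi> x)"
  unfolding act_def by simp

lemma rep:
  assumes wo: "Well_order (fst sq)"
  shows "(\<forall>x v. run qt sq Some \<eta> x = Some v \<longrightarrow> reach qt v x \<and> run qt sq f \<eta> x = f v)
    \<and> (\<forall>x y v. run qt sq Some \<eta> x = Some v \<longrightarrow> run qt sq Some \<eta> y = Some v \<longrightarrow> x = y)"
proof (induction \<eta> rule: wf_induct[OF wf_stage[OF wo]])
  case (1 \<eta>)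
  let ?P = "preds (fst sq) \<eta>"
  let ?G = "run qt sq Some" and ?F = "run qt sq f"
  have IH: "\<And>\<mu>. \<mu> \<in> ?P \<Longrightarrow> (\<forall>x v. ?G (Some \<mu>) x = Some v \<longrightarrow> reach qt v x \<and> ?F (Some \<mu>) x = f v)
    \<and> (\<forall>x y v. ?G (Some \<mu>) x = Some v \<longrightarrow> ?G (Some \<mu>) y = Some v \<longrightarrow> x = y)"
    using 1[rule_format, OF preds_stage] by simp
  have IHr: "\<And>\<mu> x v. \<mu> \<in> ?P \<Longrightarrow> ?G (Some \<mu>) x = Some v \<Longrightarrow> reach qt v x"
    and IHf: "\<And>\<mu> x v. \<mu> \<in> ?P \<Longrightarrow> ?G (Some \<mu>) x = Some v \<Longrightarrow> ?F (Some \<mu>) x = f v"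
    and IHi: "\<And>\<mu> x y v. \<mu> \<in> ?P \<Longrightarrow> ?G (Some \<mu>) x = Some v \<Longrightarrow> ?G (Some \<mu>) y = Some v \<Longrightarrow> x = y"
    using IH by blast+
  have uG: "?G \<eta> = run_step qt sq Some ?G \<eta>" and uF: "?F \<eta> = run_step qt sq f ?F \<eta>"
    using run_unfold[OF wo] by blast+
  consider "?P = {}" | \<mu> where "\<mu> \<in> ?P" "\<forall>\<xi>\<in>?P. (\<xi>, \<mu>) \<in> fst sq"
    | "?P \<noteq> {}" "\<not> (\<exists>\<mu>\<in>?P. \<forall>\<xi>\<in>?P. (\<xi>, \<mu>) \<in> fst sq)" by blast
  then show ?case
  proof cases
    case 1
    then show ?thesis using uG uF by (simp add: run_step_empty reach_refl)
  next
    case 2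
    let ?\<pi> = "tw_perm qt (snd sq \<mu>)"
    have G: "?G \<eta> x = ?G (Some \<mu>) (inv_into UNIV ?\<pi> x)" for x
      using uG run_step_max[OF wo 2] act_apply by metis
    have F: "?F \<eta> x = ?F (Some \<mu>) (inv_into UNIV ?\<pi> x)" for x
      using uF run_step_max[OF wo 2] act_apply by metis
    have s: "?\<pi> (inv_into UNIV ?\<pi> x) = x" for x
      using bij_tw bij_is_surj surj_f_inv_f by metis
    show ?thesis
    proof (intro conjI allI impI)
      fix x v assume "?G \<eta> x = Some v"
      then have "?G (Some \<mu>) (inv_into UNIV ?\<pi> x) = Some v" by (simp add: G)
      then have a: "reach qt v (inv_into UNIV ?\<pi> x)" "?F (Some \<mu>) (inv_into UNIV ?\<pi> x) = f v"
        using IHr[OF 2(1)] IHf[OF 2(1)] by auto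
      show "reach qt v x" using reach_tw[OF a(1), of "snd sq \<mu>"] s by simp
      show "?F \<eta> x = f v" using F a(2) by simp
    next
      fix x y v assume "?G \<eta> x = Some v" "?G \<eta> y = Some v"
      then have "inv_into UNIV ?\<pi> x = inv_into UNIV ?\<pi> y" using IHi[OF 2(1)] G by metis
      then show "x = y" using s by metis
    qed
  next
    case 3
    show ?thesis
    proof (intro conjI allI impI)
      fix x v assume "?G \<eta> x = Some v"
      then obtain \<xi> where \<xi>: "lim_ok ?P (fst sq) ?G x \<xi>" "?G (Some \<xi>) x = Some v"
        using run_step_lim_Some[OF wo 3] uG by metis
      have \<xi>P: "\<xi> \<in> ?P" using \<xi>(1) lim_ok_def by metis
      have r: "reach qt v x" "?F (Some \<xi>) x = f v" using IHr[OF \<xi>P \<xi>(2)] IHf[OF \<xi>P \<xi>(2)] by auto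
      have "lim_ok ?P (fst sq) ?F x \<xi>"
        unfolding lim_ok_def
      proof (intro conjI ballI impI)
        fix \<zeta> assume "\<zeta> \<in> ?P" "(\<xi>, \<zeta>) \<in> fst sq"
        then have "?G (Some \<zeta>) x = Some v" using \<xi> unfolding lim_ok_def by metis
        then show "?F (Some \<zeta>) x = ?F (Some \<xi>) x" using IHf[OF \<open>\<zeta> \<in> ?P\<close>] r by metis
      qed (rule \<xi>P)
      then have "?F \<eta> x = ?F (Some \<xi>) x" using run_step_lim_val[OF wo 3] uF by metis
      then show "reach qt v x" "?F \<eta> x = f v" using r by auto
    next
      fix x y v assume a: "?G \<eta> x = Some v" "?G \<eta> y = Some v"
      obtain \<xi> where \<xi>: "lim_ok ?P (fst sq) ?G x \<xi>" "?G (Some \<xi>) x = Some v"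
        using run_step_lim_Some[OF wo 3] uG a(1) by metis
      obtain \<xi>' where \<xi>': "lim_ok ?P (fst sq) ?G y \<xi>'" "?G (Some \<xi>') y = Some v"
        using run_step_lim_Some[OF wo 3] uG a(2) by metis
      have in1: "\<xi> \<in> ?P" "\<xi>' \<in> ?P" using \<xi> \<xi>' lim_ok_def by metis+
      then have "(\<xi>, \<xi>') \<in> fst sq \<or> (\<xi>', \<xi>) \<in> fst sq"
        using wo_total[OF wo] preds_Field by (metis subsetD)
      then show "x = y"
      proof
        assume "(\<xi>, \<xi>') \<in> fst sq"
        then have "?G (Some \<xi>') x = Some v" using \<xi> in1 unfolding lim_ok_def by metis
        then show "x = y" using IHi[OF in1(2)] \<xi>'(2) by blast
      next
        assume "(\<xi>', \<xi>) \<in> fst sq"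
        then have "?G (Some \<xi>) y = Some v" using \<xi>' in1 unfolding lim_ok_def by metis
        then show "x = y" using IHi[OF in1(1)] \<xi>(2) by blast
      qed
    qed
  qed
qed

end

section \<open>Concatenation\<close>

lemma sum_rel_simps[simp]:
  "(Inl a, Inl b) \<in> sum_rel r1 r2 \<longleftrightarrow> (a, b) \<in> r1"
  "(Inr a, Inr b) \<in> sum_rel r1 r2 \<longleftrightarrow> (a, b) \<in> r2"
  "(Inl a, Inr b) \<in> sum_rel r1 r2 \<longleftrightarrow> a \<in> Field r1 \<and> b \<in> Field r2"
  "(Inr a, Inl b) \<notin> sum_rel r1 r2"
  unfolding sum_rel_def by auto

lemma Field_sum_rel: "Field (sum_rel r1 r2) = Inl ` Field r1 \<union> Inr ` Field r2"
proof (rule Set.set_eqI)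
  fix x
  show "x \<in> Field (sum_rel r1 r2) \<longleftrightarrow> x \<in> Inl ` Field r1 \<union> Inr ` Field r2"
  proof
    assume "x \<in> Field (sum_rel r1 r2)"
    then obtain y where "(x, y) \<in> sum_rel r1 r2 \<or> (y, x) \<in> sum_rel r1 r2"
      unfolding Field_def by blast
    then show "x \<in> Inl ` Field r1 \<union> Inr ` Field r2"
      by (cases x; cases y) (auto intro: FieldI1 FieldI2)
  next
    assume "x \<in> Inl ` Field r1 \<union> Inr ` Field r2"
    then consider a where "x = Inl a" "a \<in> Field r1" | a where "x = Inr a" "a \<in> Field r2" by blast
    then show "x \<in> Field (sum_rel r1 r2)"
    proof cases
      case 1
      then obtain b where "(a, b) \<in> r1 \<or> (b, a) \<in> r1" unfolding Field_def by blast
      then show ?thesis using 1 by (metis FieldI1 FieldI2 sum_rel_simps(1))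
    next
      case 2
      then obtain b where "(a, b) \<in> r2 \<or> (b, a) \<in> r2" unfolding Field_def by blast
      then show ?thesis using 2 by (metis FieldI1 FieldI2 sum_rel_simps(2))
    qed
  qed
qed

lemma Well_order_sum_rel:
  assumes w1: "Well_order r1" and w2: "Well_order r2"
  shows "Well_order (sum_rel r1 r2)"
proof -
  let ?S = "sum_rel r1 r2"
  have refl: "refl_on (Field ?S) ?S"
  proof (rule refl_onI)
    fix x assume "x \<in> Field ?S"
    then show "(x, x) \<in> ?S" unfolding Field_sum_rel
      using wo_refl[OF w1] wo_refl[OF w2] by auto
  qed
  have trans: "trans ?S"
  proof (rule transI)
    fix x y z assume a: "(x, y) \<in> ?S" "(y, z) \<in> ?S"
    show "(x, z) \<in> ?S"
    proof (cases x)
      case (Inl x1) note x = this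
      show ?thesis
      proof (cases y)
        case (Inl y1) note y = this
        show ?thesis
        proof (cases z)
          case (Inl z1) then show ?thesis using a x y wo_trans[OF w1] by simp
        next
          case (Inr z1)
          then have "y1 \<in> Field r1" "z1 \<in> Field r2" using a y by simp_all
          moreover have "(x1, y1) \<in> r1" using a x y by simp
          ultimately show ?thesis using x \<open>z = Inr z1\<close> by (auto intro: FieldI1)
        qed
      next
        case (Inr y1) note y = this
        show ?thesis
        proof (cases z)
          case (Inl z1) then show ?thesis using a x y by simp
        next
          case (Inr z1)
          then have "x1 \<in> Field r1" "y1 \<in> Field r2" using a x y by simp_all
          moreover have "(y1, z1) \<in> r2" using a \<open>z = Inr z1\<close> y by simp
          ultimately show ?thesis using x \<open>z = Inr z1\<close> by (auto intro: FieldI2)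
        qed
      qed
    next
      case (Inr x1) note x = this
      show ?thesis
      proof (cases y)
        case (Inl y1) then show ?thesis using a x by simp
      next
        case (Inr y1) note y = this
        show ?thesis
        proof (cases z)
          case (Inl z1) then show ?thesis using a x y by simp
        next
          case (Inr z1) then show ?thesis using a x y wo_trans[OF w2] by simp
        qed
      qed
    qed
  qed
  have antisym: "antisym ?S"
  proof (rule antisymI)
    fix x y assume "(x, y) \<in> ?S" "(y, x) \<in> ?S"
    then show "x = y"
      by (cases x; cases y) (auto intro: wo_antisym[OF w1] wo_antisym[OF w2])
  qed
  have total: "total_on (Field ?S) ?S"
  proof (rule total_onI)
    fix x y assume "x \<in> Field ?S" "y \<in> Field ?S"
    then show "(x, y) \<in> ?S \<or> (y, x) \<in> ?S"
      unfolding Field_sum_rel by (auto dest: wo_total[OF w1] wo_total[OF w2])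
  qed
  have wf1: "wf (r1 - Id)" using w1 unfolding well_order_on_def by blast
  have wf2: "wf (r2 - Id)" using w2 unfolding well_order_on_def by blast
  let ?A = "map_prod Inl Inl ` (r1 - Id) :: ('a + 'a) rel"
  let ?B = "map_prod Inr Inr ` (r2 - Id) :: ('a + 'a) rel"
  let ?C = "{(Inl a, Inr b) | a b. a \<in> Field r1 \<and> b \<in> Field r2} :: ('a + 'a) rel"
  have wA: "wf ?A" by (rule wf_map_prod_image[OF wf1]) (simp add: inj_def)
  have wB: "wf ?B" by (rule wf_map_prod_image[OF wf2]) (simp add: inj_def)
  have wC: "wf ?C" by (rule wfI_min) auto
  have wCB: "wf (?C \<union> ?B)" by (rule wf_Un[OF wC wB]) auto
  have wACB: "wf (?A \<union> (?C \<union> ?B))" by (rule wf_Un[OF wA wCB]) auto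
  have sub: "?S - Id \<subseteq> ?A \<union> (?C \<union> ?B)"
  proof
    fix p assume p: "p \<in> ?S - Id"
    obtain u w where pu: "p = (u, w)" by (cases p)
    show "p \<in> ?A \<union> (?C \<union> ?B)"
    proof (cases u; cases w)
      fix a b assume ab: "u = Inl a" "w = Inl b"
      then have "(a, b) \<in> r1 - Id" using p pu by simp
      then have "map_prod Inl Inl (a, b) \<in> ?A" by (rule imageI)
      then show ?thesis using pu ab by simp
    next
      fix a b assume ab: "u = Inl a" "w = Inr b"
      then show ?thesis using p pu by simp
    next
      fix a b assume ab: "u = Inr a" "w = Inl b"
      then show ?thesis using p pu by simp
    next
      fix a b assume ab: "u = Inr a" "w = Inr b"
      then have "(a, b) \<in> r2 - Id" using p pu by simp
      then have "map_prod Inr Inr (a, b) \<in> ?B" by (rule imageI)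
      then show ?thesis using pu ab by simp
    qed
  qed
  have "wf (?S - Id)" using wf_subset[OF wACB sub] .
  moreover have "?S \<subseteq> Field ?S \<times> Field ?S" by (auto intro: FieldI1 FieldI2)
  ultimately show ?thesis
    unfolding well_order_on_def linear_order_on_def partial_order_on_def preorder_on_def
    using refl trans antisym total by blast
qed

context
  assumes inj_emb: "inj (emb :: 'i + 'i \<Rightarrow> 'i)"
begin

lemma emb_eq[simp]: "(emb x :: 'i) = emb y \<longleftrightarrow> x = y"
  using inj_emb by (simp add: inj_eq)

lemma inv_emb[simp]: "inv_into UNIV (emb :: 'i + 'i \<Rightarrow> 'i) (emb x) = x"
  using inj_emb by simp

lemma fst_seq_then: "fst (seq_then \<sigma> \<tau>) = map_prod emb emb ` sum_rel (fst \<sigma>) (fst (\<tau> :: ('i,'a) bseq))"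
  unfolding seq_then_def by simp

lemma snd_seq_then[simp]:
  "snd (seq_then \<sigma> \<tau>) (emb (Inl a :: 'i + 'i)) = snd \<sigma> (a :: 'i)"
  "snd (seq_then \<sigma> \<tau>) (emb (Inr a :: 'i + 'i)) = snd \<tau> (a :: 'i)"
  unfolding seq_then_def by simp_all

lemma mp_mem: "(x, y) \<in> map_prod (emb :: 'i + 'i \<Rightarrow> 'i) emb ` (S :: ('i + 'i) rel) \<longleftrightarrow> (\<exists>u w. x = emb u \<and> y = emb w \<and> (u, w) \<in> S)"
proof
  assume "(x, y) \<in> map_prod emb emb ` S"
  then show "\<exists>u w. x = emb u \<and> y = emb w \<and> (u, w) \<in> S" by auto
next
  assume "\<exists>u w. x = emb u \<and> y = emb w \<and> (u, w) \<in> S"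
  then obtain u w where "x = emb u" "y = emb w" "(u, w) \<in> S" by blast
  then show "(x, y) \<in> map_prod emb emb ` S" using imageI[of "(u, w)" S "map_prod emb emb"] by simp
qed

lemma mem_seq_then_rel:
  "(emb x :: 'i, emb y) \<in> fst (seq_then \<sigma> (\<tau> :: ('i,'a) bseq)) \<longleftrightarrow> (x, y) \<in> sum_rel (fst \<sigma>) (fst \<tau>)"
  unfolding fst_seq_then mp_mem by simp

lemma Field_seq_then:
  "Field (fst (seq_then \<sigma> (\<tau> :: ('i,'a) bseq))) = emb ` (Inl ` Field (fst \<sigma>) \<union> Inr ` Field (fst \<tau>))"
proof -
  have "Field (map_prod emb emb ` R) = emb ` Field R" for R :: "('i + 'i) rel"
    unfolding Field_def by force
  then show ?thesis by (simp only: fst_seq_then Field_sum_rel)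
qed

lemma wo_seq_then:
  assumes "Well_order (fst \<sigma>)" "Well_order (fst (\<tau> :: ('i,'a) bseq))"
  shows "Well_order (fst (seq_then \<sigma> \<tau>))"
proof -
  have "map_prod emb emb ` sum_rel (fst \<sigma>) (fst \<tau>) = dir_image (sum_rel (fst \<sigma>) (fst \<tau>)) emb"
    unfolding dir_image_def by auto
  then show ?thesis unfolding fst_seq_then
    using Well_order_dir_image[OF Well_order_sum_rel[OF assms]] inj_emb
    by (metis inj_on_subset subset_UNIV)
qed

lemma is_bseq_seq_then:
  assumes "is_bseq \<sigma>" "is_bseq (\<tau> :: ('i,'a) bseq)"
  shows "is_bseq (seq_then \<sigma> \<tau>)"
proof -
  have "Well_order (fst (seq_then \<sigma> \<tau>))" using assms wo_seq_then unfolding is_bseq_def by blast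
  moreover have "\<forall>\<eta>\<in>Field (fst (seq_then \<sigma> \<tau>)). basic_twist (snd (seq_then \<sigma> \<tau>) \<eta>)"
    using assms unfolding is_bseq_def Field_seq_then by auto
  ultimately show ?thesis unfolding is_bseq_def by blast
qed

lemma finite_seq_then:
  assumes "finite (Field (fst \<sigma>))" "finite (Field (fst (\<tau> :: ('i,'a) bseq)))"
  shows "finite (Field (fst (seq_then \<sigma> \<tau>)))"
  using assms unfolding Field_seq_then by simp

lemma mp_mem_right: "(x, emb w) \<in> map_prod (emb :: 'i + 'i \<Rightarrow> 'i) emb ` (S :: ('i + 'i) rel) \<longleftrightarrow> (\<exists>u. x = emb u \<and> (u, w) \<in> S)"
proof
  assume "(x, emb w) \<in> map_prod emb emb ` S"
  then obtain u w' where "x = emb u" "emb w = emb w'" "(u, w') \<in> S" unfolding mp_mem by blast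
  then show "\<exists>u. x = emb u \<and> (u, w) \<in> S" using emb_eq by metis
next
  assume "\<exists>u. x = emb u \<and> (u, w) \<in> S"
  then show "(x, emb w) \<in> map_prod emb emb ` S" unfolding mp_mem by blast
qed

lemma preds_seq_then_Inl:
  "preds (fst (seq_then \<sigma> (\<tau> :: ('i,'a) bseq))) (Some (emb (Inl a :: 'i + 'i))) = (emb \<circ> (Inl :: 'i \<Rightarrow> 'i + 'i)) ` preds (fst \<sigma>) (Some a)"
proof (rule Set.set_eqI)
  fix x
  have "x \<in> preds (fst (seq_then \<sigma> \<tau>)) (Some (emb (Inl a :: 'i + 'i))) \<longleftrightarrow>
     (\<exists>u. x = emb u \<and> (u, Inl a) \<in> sum_rel (fst \<sigma>) (fst \<tau>) \<and> u \<noteq> Inl a)"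
    unfolding preds_Some fst_seq_then mp_mem_right by auto
  also have "\<dots> \<longleftrightarrow> (\<exists>c. x = emb (Inl c) \<and> (c, a) \<in> fst \<sigma> \<and> c \<noteq> a)"
  proof
    assume "\<exists>u. x = emb u \<and> (u, Inl a) \<in> sum_rel (fst \<sigma>) (fst \<tau>) \<and> u \<noteq> Inl a"
    then obtain u where u: "x = emb u" "(u, Inl a) \<in> sum_rel (fst \<sigma>) (fst \<tau>)" "u \<noteq> Inl a" by blast
    then show "\<exists>c. x = emb (Inl c) \<and> (c, a) \<in> fst \<sigma> \<and> c \<noteq> a" by (cases u) auto
  qed auto
  also have "\<dots> \<longleftrightarrow> x \<in> (emb \<circ> (Inl :: 'i \<Rightarrow> 'i + 'i)) ` preds (fst \<sigma>) (Some a)"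
    unfolding preds_Some by auto
  finally show "x \<in> preds (fst (seq_then \<sigma> \<tau>)) (Some (emb (Inl a :: 'i + 'i))) \<longleftrightarrow> x \<in> (emb \<circ> (Inl :: 'i \<Rightarrow> 'i + 'i)) ` preds (fst \<sigma>) (Some a)" .
qed

lemma preds_seq_then_Inr:
  assumes b: "b \<in> Field (fst \<tau>)"
  shows "preds (fst (seq_then \<sigma> (\<tau> :: ('i,'a) bseq))) (Some (emb (Inr b :: 'i + 'i)))
    = (emb \<circ> (Inl :: 'i \<Rightarrow> 'i + 'i)) ` Field (fst \<sigma>) \<union> (emb \<circ> (Inr :: 'i \<Rightarrow> 'i + 'i)) ` preds (fst \<tau>) (Some b)"
proof (rule Set.set_eqI)
  fix x
  have "x \<in> preds (fst (seq_then \<sigma> \<tau>)) (Some (emb (Inr b :: 'i + 'i))) \<longleftrightarrow>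
     (\<exists>u. x = emb u \<and> (u, Inr b) \<in> sum_rel (fst \<sigma>) (fst \<tau>) \<and> u \<noteq> Inr b)"
    unfolding preds_Some fst_seq_then mp_mem_right by auto
  also have "\<dots> \<longleftrightarrow> (\<exists>c. x = emb (Inl c) \<and> c \<in> Field (fst \<sigma>)) \<or> (\<exists>c. x = emb (Inr c) \<and> (c, b) \<in> fst \<tau> \<and> c \<noteq> b)"
  proof
    assume "\<exists>u. x = emb u \<and> (u, Inr b) \<in> sum_rel (fst \<sigma>) (fst \<tau>) \<and> u \<noteq> Inr b"
    then obtain u where u: "x = emb u" "(u, Inr b) \<in> sum_rel (fst \<sigma>) (fst \<tau>)" "u \<noteq> Inr b" by blast
    then show "(\<exists>c. x = emb (Inl c) \<and> c \<in> Field (fst \<sigma>)) \<or> (\<exists>c. x = emb (Inr c) \<and> (c, b) \<in> fst \<tau> \<and> c \<noteq> b)"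
      by (cases u) auto
  qed (use b in auto)
  also have "\<dots> \<longleftrightarrow> x \<in> (emb \<circ> (Inl :: 'i \<Rightarrow> 'i + 'i)) ` Field (fst \<sigma>) \<union> (emb \<circ> (Inr :: 'i \<Rightarrow> 'i + 'i)) ` preds (fst \<tau>) (Some b)"
    unfolding preds_Some by auto
  finally show "x \<in> preds (fst (seq_then \<sigma> \<tau>)) (Some (emb (Inr b :: 'i + 'i))) \<longleftrightarrow> x \<in> (emb \<circ> (Inl :: 'i \<Rightarrow> 'i + 'i)) ` Field (fst \<sigma>) \<union> (emb \<circ> (Inr :: 'i \<Rightarrow> 'i + 'i)) ` preds (fst \<tau>) (Some b)" .
qed

lemma preds_seq_then_None:
  "preds (fst (seq_then \<sigma> (\<tau> :: ('i,'a) bseq))) None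
    = (emb \<circ> (Inl :: 'i \<Rightarrow> 'i + 'i)) ` Field (fst \<sigma>) \<union> (emb \<circ> (Inr :: 'i \<Rightarrow> 'i + 'i)) ` Field (fst \<tau>)"
  unfolding preds_None Field_seq_then by (simp only: image_Un image_comp)

lemma concat_run:
  assumes wo1: "Well_order (fst \<sigma>)" and wo2: "Well_order (fst (\<tau> :: ('i,'a) bseq))"
  shows "(\<forall>a. \<eta> = Some (emb (Inl a :: 'i + 'i)) \<longrightarrow> run qt (seq_then \<sigma> \<tau>) f \<eta> = run qt \<sigma> f (Some a))
    \<and> (\<forall>b. \<eta> = Some (emb (Inr b :: 'i + 'i)) \<longrightarrow> b \<in> Field (fst \<tau>) \<longrightarrow>
          run qt (seq_then \<sigma> \<tau>) f \<eta> = run qt \<tau> (run qt \<sigma> f None) (Some b))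
    \<and> (\<eta> = None \<longrightarrow> run qt (seq_then \<sigma> \<tau>) f None = run qt \<tau> (run qt \<sigma> f None) None)"
proof -
  let ?sq = "seq_then \<sigma> \<tau>"
  let ?R = "fst ?sq"
  let ?g = "run qt \<sigma> f None"
  let ?hl = "emb \<circ> (Inl :: 'i \<Rightarrow> 'i + 'i)" and ?hr = "emb \<circ> (Inr :: 'i \<Rightarrow> 'i + 'i)"
  have wo: "Well_order ?R" by (rule wo_seq_then[OF wo1 wo2])
  have ordl: "(?hl x, ?hl y) \<in> ?R \<longleftrightarrow> (x, y) \<in> fst \<sigma>" for x y
    using mem_seq_then_rel[of _ _ \<sigma> \<tau>] by simp
  have ordr: "(?hr x, ?hr y) \<in> ?R \<longleftrightarrow> (x, y) \<in> fst \<tau>" for x y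
    using mem_seq_then_rel[of _ _ \<sigma> \<tau>] by simp
  have ordlr: "(?hl x, ?hr y) \<in> ?R \<longleftrightarrow> x \<in> Field (fst \<sigma>) \<and> y \<in> Field (fst \<tau>)" for x y
    using mem_seq_then_rel[of _ _ \<sigma> \<tau>] by simp
  have ordrl: "(?hr x, ?hl y) \<notin> ?R" for x y
    using mem_seq_then_rel[of _ _ \<sigma> \<tau>] by simp
  have PF1: "preds (fst \<sigma>) e \<subseteq> Field (fst \<sigma>)" and PF2: "preds (fst \<tau>) e \<subseteq> Field (fst \<tau>)" for e
    by (rule preds_Field)+
  have trl: "run_step qt ?sq f0 F \<eta>0 = run_step qt \<sigma> f0' F' \<eta>'"
    if P: "preds ?R \<eta>0 = ?hl ` preds (fst \<sigma>) \<eta>'" and ne: "preds (fst \<sigma>) \<eta>' \<noteq> {}"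
      and Fv: "\<And>\<mu>. \<mu> \<in> preds (fst \<sigma>) \<eta>' \<Longrightarrow> F (Some (?hl \<mu>)) = F' (Some \<mu>)"
    for f0 F \<eta>0 f0' F' \<eta>'
  proof -
    have T1: "?hl ` preds (fst \<sigma>) \<eta>' \<subseteq> preds ?R \<eta>0" using P by simp
    have T2: "(?hl \<xi>, ?hl \<zeta>) \<in> ?R \<longleftrightarrow> (\<xi>, \<zeta>) \<in> fst \<sigma>" for \<xi> \<zeta> by (rule ordl)
    have T3: "\<exists>\<mu>\<in>preds (fst \<sigma>) \<eta>'. (\<xi>, ?hl \<mu>) \<in> ?R" if "\<xi> \<in> preds ?R \<eta>0" for \<xi>
    proof -
      have "\<xi> \<in> ?hl ` preds (fst \<sigma>) \<eta>'" using that P by simp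
      then obtain \<mu> where \<mu>: "\<xi> = ?hl \<mu>" "\<mu> \<in> preds (fst \<sigma>) \<eta>'" by (rule imageE)
      have "(\<mu>, \<mu>) \<in> fst \<sigma>" by (rule wo_refl[OF wo1 subsetD[OF PF1 \<mu>(2)]])
      then show ?thesis by (intro bexI[OF _ \<mu>(2)]) (simp only: \<mu>(1) ordl)
    qed
    have T4: "\<zeta> \<in> ?hl ` preds (fst \<sigma>) \<eta>'" if "\<zeta> \<in> preds ?R \<eta>0" for \<zeta> using that P by simp
    have T5: "snd ?sq (?hl \<mu>) = snd \<sigma> \<mu>" for \<mu> by simp
    have T6: "F (Some (?hl \<mu>)) = F' (Some \<mu>)" if "\<mu> \<in> preds (fst \<sigma>) \<eta>'" for \<mu> using Fv[OF that] .
    show ?thesis by (rule run_step_transport[OF wo wo1 ne, where h = "?hl" and F = F and F' = F' and \<eta> = \<eta>0, OF T1 T2 T3 T4 T5 T6])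
  qed
  show ?thesis
  proof (induction \<eta> rule: wf_induct[OF wf_stage[OF wo]])
    case (1 \<eta>)
    have IHl: "run qt ?sq f (Some (?hl a)) = run qt \<sigma> f (Some a)" if "?hl a \<in> preds ?R \<eta>" for a
      using 1[rule_format, OF preds_stage[OF that]] by simp
    have IHr: "run qt ?sq f (Some (?hr b)) = run qt \<tau> ?g (Some b)"
      if "?hr b \<in> preds ?R \<eta>" "b \<in> Field (fst \<tau>)" for b
      using 1[rule_format, OF preds_stage[OF that(1)]] that(2) by simp
    have uS: "run qt ?sq f e = run_step qt ?sq f (run qt ?sq f) e" for e by (rule run_unfold[OF wo])
    have u1: "run qt \<sigma> f e = run_step qt \<sigma> f (run qt \<sigma> f) e" for e by (rule run_unfold[OF wo1])
    have u2: "run qt \<tau> ?g e = run_step qt \<tau> ?g (run qt \<tau> ?g) e" for e by (rule run_unfold[OF wo2])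
    have term1: "run_step qt ?sq f (run qt ?sq f) \<eta> = ?g"
      if P: "preds ?R \<eta> = ?hl ` Field (fst \<sigma>)"
    proof (cases "Field (fst \<sigma>) = {}")
      case True
      then show ?thesis using P u1[of None] by (simp add: run_step_empty preds_None)
    next
      case False
      have "run_step qt ?sq f (run qt ?sq f) \<eta> = run_step qt \<sigma> f (run qt \<sigma> f) None"
        by (rule trl) (use P False IHl in \<open>auto simp: preds_None\<close>)
      then show ?thesis using u1[of None] by simp
    qed
    show ?case
    proof (intro conjI allI impI)
      fix a assume e: "\<eta> = Some (emb (Inl a :: 'i + 'i))"
      have P: "preds ?R \<eta> = ?hl ` preds (fst \<sigma>) (Some a)" using e preds_seq_then_Inl by simp
      show "run qt ?sq f \<eta> = run qt \<sigma> f (Some a)"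
      proof (cases "preds (fst \<sigma>) (Some a) = {}")
        case True
        then show ?thesis using P uS[of \<eta>] u1[of "Some a"] by (simp add: run_step_empty)
      next
        case False
        have "run_step qt ?sq f (run qt ?sq f) \<eta> = run_step qt \<sigma> f (run qt \<sigma> f) (Some a)"
          by (rule trl[OF P False]) (use P IHl in auto)
        then show ?thesis using uS[of \<eta>] u1[of "Some a"] by simp
      qed
    next
      fix b assume e: "\<eta> = Some (emb (Inr b :: 'i + 'i))" and b: "b \<in> Field (fst \<tau>)"
      have P: "preds ?R \<eta> = ?hl ` Field (fst \<sigma>) \<union> ?hr ` preds (fst \<tau>) (Some b)"
        using e preds_seq_then_Inr[OF b] by simp
      show "run qt ?sq f \<eta> = run qt \<tau> ?g (Some b)"
      proof (cases "preds (fst \<tau>) (Some b) = {}")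
        case True
        then have "run qt ?sq f \<eta> = ?g" using term1 P uS[of \<eta>] by simp
        then show ?thesis using True u2[of "Some b"] by (simp add: run_step_empty)
      next
        case False
        have "run_step qt ?sq f (run qt ?sq f) \<eta> = run_step qt \<tau> ?g (run qt \<tau> ?g) (Some b)"
        proof -
          have T1: "?hr ` preds (fst \<tau>) (Some b) \<subseteq> preds ?R \<eta>" using P by blast
          have T2: "(?hr \<xi>, ?hr \<zeta>) \<in> ?R \<longleftrightarrow> (\<xi>, \<zeta>) \<in> fst \<tau>" for \<xi> \<zeta> by (rule ordr)
          have T3: "\<exists>\<mu>\<in>preds (fst \<tau>) (Some b). (\<xi>, ?hr \<mu>) \<in> ?R" if "\<xi> \<in> preds ?R \<eta>" for \<xi>
          proof -
            obtain \<mu>0 where \<mu>0: "\<mu>0 \<in> preds (fst \<tau>) (Some b)" using False by blast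
            have \<mu>0F: "\<mu>0 \<in> Field (fst \<tau>)" by (rule subsetD[OF PF2 \<mu>0])
            have "\<xi> \<in> ?hl ` Field (fst \<sigma>) \<union> ?hr ` preds (fst \<tau>) (Some b)" using that P by simp
            then show ?thesis
            proof (rule UnE)
              assume "\<xi> \<in> ?hl ` Field (fst \<sigma>)"
              then obtain a where a: "\<xi> = ?hl a" "a \<in> Field (fst \<sigma>)" by (rule imageE)
              have "(?hl a, ?hr \<mu>0) \<in> ?R" using ordlr a(2) \<mu>0F by simp
              then show ?thesis using a(1) \<mu>0 by (intro bexI[OF _ \<mu>0]) simp
            next
              assume "\<xi> \<in> ?hr ` preds (fst \<tau>) (Some b)"
              then obtain \<mu> where \<mu>: "\<xi> = ?hr \<mu>" "\<mu> \<in> preds (fst \<tau>) (Some b)" by (rule imageE)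
              have "(\<mu>, \<mu>) \<in> fst \<tau>" by (rule wo_refl[OF wo2 subsetD[OF PF2 \<mu>(2)]])
              then show ?thesis by (intro bexI[OF _ \<mu>(2)]) (simp only: \<mu>(1) ordr)
            qed
          qed
          have T4: "\<zeta> \<in> ?hr ` preds (fst \<tau>) (Some b)"
            if "\<mu> \<in> preds (fst \<tau>) (Some b)" "\<zeta> \<in> preds ?R \<eta>" "(?hr \<mu>, \<zeta>) \<in> ?R" for \<mu> \<zeta>
          proof -
            have "\<zeta> \<in> ?hl ` Field (fst \<sigma>) \<union> ?hr ` preds (fst \<tau>) (Some b)" using that P by simp
            then show ?thesis
            proof (rule UnE)
              assume "\<zeta> \<in> ?hl ` Field (fst \<sigma>)"
              then obtain a where a: "\<zeta> = ?hl a" by (rule imageE)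
              then show ?thesis using that(3) ordrl by simp
            qed
          qed
          have T5: "snd ?sq (?hr \<mu>) = snd \<tau> \<mu>" for \<mu> by simp
          have T6: "run qt ?sq f (Some (?hr \<mu>)) = run qt \<tau> ?g (Some \<mu>)" if "\<mu> \<in> preds (fst \<tau>) (Some b)" for \<mu>
          proof (rule IHr)
            show "?hr \<mu> \<in> preds ?R \<eta>" using that P by simp
            show "\<mu> \<in> Field (fst \<tau>)" by (rule subsetD[OF PF2 that])
          qed
          show ?thesis by (rule run_step_transport[OF wo wo2 False, where h = "?hr" and F = "run qt ?sq f" and F' = "run qt \<tau> ?g" and \<eta> = \<eta>, OF T1 T2 T3 T4 T5 T6])
        qed
        then show ?thesis using uS[of \<eta>] u2[of "Some b"] by simp
      qed
    next
      assume e: "\<eta> = None"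
      have P: "preds ?R \<eta> = ?hl ` Field (fst \<sigma>) \<union> ?hr ` Field (fst \<tau>)"
        using e preds_seq_then_None by simp
      show "run qt ?sq f None = run qt \<tau> ?g None"
      proof (cases "Field (fst \<tau>) = {}")
        case True
        then have "run qt ?sq f \<eta> = ?g" using term1 P uS[of \<eta>] by simp
        then show ?thesis using True u2[of None] e by (simp add: run_step_empty preds_None)
      next
        case False
        have ne: "preds (fst \<tau>) None \<noteq> {}" using False by (simp add: preds_None)
        have "run_step qt ?sq f (run qt ?sq f) \<eta> = run_step qt \<tau> ?g (run qt \<tau> ?g) None"
        proof -
          have T1: "?hr ` preds (fst \<tau>) None \<subseteq> preds ?R \<eta>" using P by (simp add: preds_None)
          have T2: "(?hr \<xi>, ?hr \<zeta>) \<in> ?R \<longleftrightarrow> (\<xi>, \<zeta>) \<in> fst \<tau>" for \<xi> \<zeta> by (rule ordr)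
          have T3: "\<exists>\<mu>\<in>preds (fst \<tau>) None. (\<xi>, ?hr \<mu>) \<in> ?R" if "\<xi> \<in> preds ?R \<eta>" for \<xi>
          proof -
            obtain \<mu>0 where \<mu>0: "\<mu>0 \<in> Field (fst \<tau>)" using False by blast
            have \<mu>0': "\<mu>0 \<in> preds (fst \<tau>) None" using \<mu>0 by (simp add: preds_None)
            have "\<xi> \<in> ?hl ` Field (fst \<sigma>) \<union> ?hr ` Field (fst \<tau>)" using that P by simp
            then show ?thesis
            proof (rule UnE)
              assume "\<xi> \<in> ?hl ` Field (fst \<sigma>)"
              then obtain a where a: "\<xi> = ?hl a" "a \<in> Field (fst \<sigma>)" by (rule imageE)
              have "(?hl a, ?hr \<mu>0) \<in> ?R" using ordlr a(2) \<mu>0 by simp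
              then show ?thesis using a(1) by (intro bexI[OF _ \<mu>0']) simp
            next
              assume "\<xi> \<in> ?hr ` Field (fst \<tau>)"
              then obtain \<mu> where \<mu>: "\<xi> = ?hr \<mu>" "\<mu> \<in> Field (fst \<tau>)" by (rule imageE)
              have \<mu>': "\<mu> \<in> preds (fst \<tau>) None" using \<mu>(2) by (simp add: preds_None)
              have "(\<mu>, \<mu>) \<in> fst \<tau>" by (rule wo_refl[OF wo2 \<mu>(2)])
              then show ?thesis by (intro bexI[OF _ \<mu>']) (simp only: \<mu>(1) ordr)
            qed
          qed
          have T4: "\<zeta> \<in> ?hr ` preds (fst \<tau>) None"
            if "\<mu> \<in> preds (fst \<tau>) None" "\<zeta> \<in> preds ?R \<eta>" "(?hr \<mu>, \<zeta>) \<in> ?R" for \<mu> \<zeta>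
          proof -
            have "\<zeta> \<in> ?hl ` Field (fst \<sigma>) \<union> ?hr ` Field (fst \<tau>)" using that P by simp
            then show ?thesis
            proof (rule UnE)
              assume "\<zeta> \<in> ?hl ` Field (fst \<sigma>)"
              then obtain a where a: "\<zeta> = ?hl a" by (rule imageE)
              then show ?thesis using that(3) ordrl by simp
            qed (simp add: preds_None)
          qed
          have T5: "snd ?sq (?hr \<mu>) = snd \<tau> \<mu>" for \<mu> by simp
          have T6: "run qt ?sq f (Some (?hr \<mu>)) = run qt \<tau> ?g (Some \<mu>)" if "\<mu> \<in> preds (fst \<tau>) None" for \<mu>
          proof (rule IHr)
            show "\<mu> \<in> Field (fst \<tau>)" using that by (simp add: preds_None)
            then show "?hr \<mu> \<in> preds ?R \<eta>" using P by simp
          qed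
          show ?thesis by (rule run_step_transport[OF wo wo2 ne, where h = "?hr" and F = "run qt ?sq f" and F' = "run qt \<tau> ?g" and \<eta> = \<eta>, OF T1 T2 T3 T4 T5 T6])
        qed
        then show ?thesis using uS[of \<eta>] u2[of None] e by simp
      qed
    qed
  qed
qed

lemma apply_seq_then:
  assumes "Well_order (fst \<sigma>)" "Well_order (fst (\<tau> :: ('i,'a) bseq))"
  shows "apply_seq qt (seq_then \<sigma> \<tau>) f = apply_seq qt \<tau> (apply_seq qt \<sigma> f)"
  unfolding apply_seq_def using concat_run[OF assms, of None] by simp

end




section \<open>The exponent of S_24\<close>

lemma perm_order_props:
  assumes "\<pi> permutes {..<24::nat}"
  shows "0 < perm_order \<pi>" "\<pi> ^^ perm_order \<pi> = id"
proof -
  have "permutation \<pi>" using assms permutation_permutes by blast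
  then obtain n where n: "\<pi> ^^ n = id" "n > 0" by (rule permutation_is_nilpotent)
  have "0 < perm_order \<pi> \<and> \<pi> ^^ perm_order \<pi> = id"
    unfolding perm_order_def by (rule LeastI[of _ n]) (use n in auto)
  then show "0 < perm_order \<pi>" "\<pi> ^^ perm_order \<pi> = id" by auto
qed

lemma S24_fin: "finite {perm_order \<pi> | \<pi>. \<pi> permutes {..<24::nat}}"
proof -
  have "{perm_order \<pi> | \<pi>. \<pi> permutes {..<24::nat}} = perm_order ` {\<pi>. \<pi> permutes {..<24::nat}}"
    by blast
  then show ?thesis using finite_permutations[of "{..<24::nat}"] by simp
qed

lemma S24_pos: "0 < S24_exponent"
proof -
  have "0 \<notin> {perm_order \<pi> | \<pi>. \<pi> permutes {..<24::nat}}"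
    using perm_order_props(1) by fastforce
  then have "Lcm {perm_order \<pi> | \<pi>. \<pi> permutes {..<24::nat}} \<noteq> 0"
    using Lcm_0_iff[OF S24_fin] by blast
  then show ?thesis unfolding S24_exponent_def by simp
qed

lemma S24_id: assumes "\<pi> permutes {..<24::nat}" shows "\<pi> ^^ S24_exponent = id"
proof -
  have "perm_order \<pi> dvd S24_exponent"
    unfolding S24_exponent_def by (rule dvd_Lcm) (use assms in blast)
  then obtain k where k: "S24_exponent = perm_order \<pi> * k" by (rule dvdE)
  show ?thesis unfolding k funpow_mult[symmetric] perm_order_props(2)[OF assms] by simp
qed

lemma small_perm_exp:
  fixes h :: "'c \<Rightarrow> 'c"
  assumes fin: "finite Ob" and card: "card Ob \<le> 24" and into: "h ` Ob \<subseteq> Ob" and inj: "inj_on h Ob"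
    and c: "c \<in> Ob"
  shows "(h ^^ S24_exponent) c = c"
proof -
  let ?n = "card Ob"
  obtain b where b: "bij_betw b Ob {0..<?n}" using ex_bij_betw_finite_nat[OF fin] by blast
  let ?bi = "inv_into Ob b"
  have bi: "bij_betw ?bi {0..<?n} Ob" by (rule bij_betw_inv_into[OF b])
  have hO: "h ` Ob = Ob" by (rule endo_inj_surj[OF fin into inj])
  have hb: "bij_betw h Ob Ob" using inj hO unfolding bij_betw_def by blast
  define \<pi> where "\<pi> m = (if m < ?n then b (h (?bi m)) else m)" for m
  have bb: "bij_betw (b \<circ> (h \<circ> ?bi)) {0..<?n} {0..<?n}"
    by (rule bij_betw_trans[OF bij_betw_trans[OF bi hb] b])
  have "bij_betw \<pi> {0..<?n} {0..<?n}"
    by (rule bij_betw_cong[THEN iffD1, OF _ bb]) (simp add: \<pi>_def)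
  then have "\<pi> permutes {0..<?n}" by (rule bij_imp_permutes) (simp add: \<pi>_def)
  then have p24: "\<pi> permutes {..<24}" by (rule permutes_subset) (use card in auto)
  have biO: "?bi m \<in> Ob" if "m < ?n" for m using bi that unfolding bij_betw_def by auto
  have bO: "b x < ?n" if "x \<in> Ob" for x using b that unfolding bij_betw_def by auto
  have bib: "?bi (b x) = x" if "x \<in> Ob" for x using b that by (simp add: bij_betw_inv_into_left)
  have hkO: "(h ^^ k) x \<in> Ob" if "x \<in> Ob" for k x
    using that into by (induction k) auto
  have it: "(\<pi> ^^ k) m = b ((h ^^ k) (?bi m))" if "m < ?n" for k m
  proof (induction k)
    case 0 then show ?case using that by (simp add: bij_betw_inv_into_right[OF b])
  next
    case (Suc k)
    have "(\<pi> ^^ Suc k) m = \<pi> (b ((h ^^ k) (?bi m)))" using Suc by simp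
    also have "\<dots> = b (h (?bi (b ((h ^^ k) (?bi m)))))"
      unfolding \<pi>_def using bO[OF hkO[OF biO[OF that]]] by simp
    also have "\<dots> = b ((h ^^ Suc k) (?bi m))" using bib[OF hkO[OF biO[OF that]]] by simp
    finally show ?case .
  qed
  have m: "b c < ?n" by (rule bO[OF c])
  have "b c = (\<pi> ^^ S24_exponent) (b c)" using S24_id[OF p24] by simp
  also have "\<dots> = b ((h ^^ S24_exponent) c)" using it[OF m] bib[OF c] by simp
  finally have "b ((h ^^ S24_exponent) c) = b c" by simp
  then show ?thesis using b c hkO[OF c] unfolding bij_betw_def inj_on_def by blast
qed

lemma Well_order_empty': "Well_order {}"
  by (simp add: well_order_on_def linear_order_on_def partial_order_on_def preorder_on_def
      refl_on_def trans_def antisym_def total_on_def)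

lemma apply_empty: "apply_seq qt (empty_seq :: ('i,'a) bseq) f = f"
proof -
  have w: "Well_order (fst (empty_seq :: ('i,'a) bseq))" by (simp add: empty_seq_def Well_order_empty')
  have "run qt (empty_seq :: ('i,'a) bseq) f None = run_step qt (empty_seq :: ('i,'a) bseq) f (run qt (empty_seq :: ('i,'a) bseq) f) None"
    by (rule run_unfold[OF w])
  also have "\<dots> = f" by (rule run_step_empty) (simp add: empty_seq_def preds_None)
  finally show ?thesis unfolding apply_seq_def .
qed

lemma is_bseq_empty: "is_bseq empty_seq"
  unfolding is_bseq_def by (simp add: empty_seq_def Well_order_empty')


primrec pw :: "('i, 'a) bseq \<Rightarrow> nat \<Rightarrow> ('i, 'a) bseq" where
  "pw \<sigma> 0 = empty_seq"
| "pw \<sigma> (Suc n) = seq_then \<sigma> (pw \<sigma> n)"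

locale cube_i = cube qt cells for qt :: "axis \<Rightarrow> 'a ext \<Rightarrow> 'c \<Rightarrow> 'c" and cells +
  fixes idx :: "'i itself"
  assumes inj_emb: "inj (emb :: 'i + 'i \<Rightarrow> 'i)"
begin

abbreviation ucs :: "('i, 'a) bseq set" where "ucs \<equiv> uc qt cells"

definition gg :: "('i, 'a) bseq \<Rightarrow> 'c \<Rightarrow> 'c" where
  "gg sq c = the (apply_seq qt sq Some c)"

lemma ucsD: "sq \<in> ucs \<Longrightarrow> is_bseq sq \<and> legal cells (apply_seq qt sq Some)"
  unfolding uc_def by blast

lemma wo_of: "sq \<in> ucs \<Longrightarrow> Well_order (fst sq)"
  using ucsD unfolding is_bseq_def by blast

lemma gg_rep:
  assumes sq: "sq \<in> ucs" and c: "c \<in> cells"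
  shows "apply_seq qt sq Some c = Some (gg sq c)" "reach qt (gg sq c) c"
    "apply_seq qt sq f c = f (gg sq c)"
proof -
  have "apply_seq qt sq Some c \<noteq> None" using ucsD[OF sq] c unfolding legal_def by blast
  then show a: "apply_seq qt sq Some c = Some (gg sq c)" unfolding gg_def by auto
  show "reach qt (gg sq c) c" "apply_seq qt sq f c = f (gg sq c)"
    using rep[OF wo_of[OF sq], of None f] a unfolding apply_seq_def by blast+
qed

lemma gg_cells: "sq \<in> ucs \<Longrightarrow> c \<in> cells \<Longrightarrow> gg sq c \<in> cells"
  using gg_rep(2) reach_sym reach_cells by metis

lemma gg_inj: "sq \<in> ucs \<Longrightarrow> c \<in> cells \<Longrightarrow> d \<in> cells \<Longrightarrow> gg sq c = gg sq d \<Longrightarrow> c = d"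
  using rep[OF wo_of, of sq None Some] gg_rep(1) unfolding apply_seq_def by metis

lemma equiv_iff:
  assumes "\<sigma> \<in> ucs" "\<sigma>' \<in> ucs"
  shows "seq_equiv qt cells \<sigma> \<sigma>' \<longleftrightarrow> (\<forall>c\<in>cells. gg \<sigma> c = gg \<sigma>' c)"
proof
  assume e: "seq_equiv qt cells \<sigma> \<sigma>'"
  show "\<forall>c\<in>cells. gg \<sigma> c = gg \<sigma>' c"
  proof
    fix c assume c: "c \<in> cells"
    define f :: "'c \<Rightarrow> color option" where "f d = (if d = gg \<sigma> c then Some Red else Some White)" for d
    have "apply_seq qt \<sigma> f c = apply_seq qt \<sigma>' f c" using e c unfolding seq_equiv_def by blast
    then have "f (gg \<sigma> c) = f (gg \<sigma>' c)" using gg_rep(3)[OF assms(1) c] gg_rep(3)[OF assms(2) c] by metis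
    then show "gg \<sigma> c = gg \<sigma>' c" unfolding f_def by (auto split: if_splits)
  qed
next
  assume eq: "\<forall>c\<in>cells. gg \<sigma> c = gg \<sigma>' c"
  show "seq_equiv qt cells \<sigma> \<sigma>'"
    unfolding seq_equiv_def
  proof (intro allI ballI)
    fix f :: "'c \<Rightarrow> color option" and c assume c: "c \<in> cells"
    show "apply_seq qt \<sigma> f c = apply_seq qt \<sigma>' f c"
      using gg_rep(3)[OF assms(1) c, of f] gg_rep(3)[OF assms(2) c, of f] eq c by simp
  qed
qed

lemma then_uc:
  assumes s: "\<sigma> \<in> ucs" and t: "\<tau> \<in> ucs"
  shows "seq_then \<sigma> \<tau> \<in> ucs" "c \<in> cells \<Longrightarrow> gg (seq_then \<sigma> \<tau>) c = gg \<sigma> (gg \<tau> c)"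
proof -
  have ap: "apply_seq qt (seq_then \<sigma> \<tau>) f = apply_seq qt \<tau> (apply_seq qt \<sigma> f)" for f :: "'c \<Rightarrow> 'c option"
    by (rule apply_seq_then[OF inj_emb wo_of[OF s] wo_of[OF t]])
  have v: "apply_seq qt (seq_then \<sigma> \<tau>) Some c = Some (gg \<sigma> (gg \<tau> c))" if c: "c \<in> cells" for c
    using ap gg_rep(3)[OF t c, of "apply_seq qt \<sigma> Some"] gg_rep(1)[OF s gg_cells[OF t c]] by simp
  have b: "is_bseq (seq_then \<sigma> \<tau>)"
    by (rule is_bseq_seq_then[OF inj_emb]) (use ucsD[OF s] ucsD[OF t] in blast)+
  show u: "seq_then \<sigma> \<tau> \<in> ucs" unfolding uc_def legal_def using b v by simp
  show "c \<in> cells \<Longrightarrow> gg (seq_then \<sigma> \<tau>) c = gg \<sigma> (gg \<tau> c)"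
    using v gg_rep(1)[OF u] by simp
qed

lemma empty_uc: "(empty_seq :: ('i,'a) bseq) \<in> ucs" "gg empty_seq c = c"
proof -
  have b: "is_bseq (empty_seq :: ('i,'a) bseq)" by (rule is_bseq_empty)
  have a: "apply_seq qt (empty_seq :: ('i,'a) bseq) Some = Some" by (rule apply_empty)
  show "(empty_seq :: ('i,'a) bseq) \<in> ucs"
    unfolding uc_def legal_def using b a by simp
  show "gg empty_seq c = c" unfolding gg_def a by simp
qed

lemma pw_uc: assumes s: "\<sigma> \<in> ucs"
  shows "pw \<sigma> n \<in> ucs \<and> (\<forall>c\<in>cells. gg (pw \<sigma> n) c = (gg \<sigma> ^^ n) c)"
proof (induction n)
  case 0 then show ?case using empty_uc by simp
next
  case (Suc n)
  then show ?case using then_uc[OF s, of "pw \<sigma> n"] by simp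
qed

lemma pw_fin: "finite (Field (fst \<sigma>)) \<Longrightarrow> finite (Field (fst (pw (\<sigma> :: ('i,'a) bseq) n)))"
  by (induction n) (simp_all add: empty_seq_def finite_seq_then[OF inj_emb])

lemma gg_exp: assumes s: "\<sigma> \<in> ucs" and c: "c \<in> cells"
  shows "(gg \<sigma> ^^ S24_exponent) c = c"
proof (rule small_perm_exp[of "{d. reach qt c d}"])
  show "finite {d. reach qt c d}" by (rule orbit_fin)
  show "card {d. reach qt c d} \<le> 24" by (rule orbit_card)
  have sub: "{d. reach qt c d} \<subseteq> cells" using reach_cells c by blast
  show "gg \<sigma> ` {d. reach qt c d} \<subseteq> {d. reach qt c d}"
  proof
    fix x assume "x \<in> gg \<sigma> ` {d. reach qt c d}"
    then obtain d where d: "reach qt c d" "x = gg \<sigma> d" by blast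
    have "d \<in> cells" using sub d by blast
    then have "reach qt d (gg \<sigma> d)" by (rule reach_sym[OF gg_rep(2)[OF s]])
    then show "x \<in> {d. reach qt c d}" using reach_trans[OF _ d(1)] d(2) by simp
  qed
  show "inj_on (gg \<sigma>) {d. reach qt c d}"
  proof (rule inj_onI)
    fix x y assume "x \<in> {d. reach qt c d}" "y \<in> {d. reach qt c d}" "gg \<sigma> x = gg \<sigma> y"
    then show "x = y" using gg_inj[OF s] sub by (meson subsetD)
  qed
  show "c \<in> {d. reach qt c d}" by (simp add: reach_refl)
qed

definition cls :: "('i, 'a) bseq \<Rightarrow> ('i, 'a) bseq set" where
  "cls \<sigma> = uc_rel qt cells `` {\<sigma>}"

lemma cls_eq: assumes "\<sigma> \<in> ucs" shows "cls \<sigma> = {\<rho>\<in>ucs. \<forall>c\<in>cells. gg \<rho> c = gg \<sigma> c}"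
proof (rule Set.set_eqI)
  fix \<rho>
  show "\<rho> \<in> cls \<sigma> \<longleftrightarrow> \<rho> \<in> {\<rho>\<in>ucs. \<forall>c\<in>cells. gg \<rho> c = gg \<sigma> c}"
  proof
    assume "\<rho> \<in> cls \<sigma>"
    then have r: "\<rho> \<in> ucs" "seq_equiv qt cells \<sigma> \<rho>" unfolding cls_def uc_rel_def by auto
    then show "\<rho> \<in> {\<rho>\<in>ucs. \<forall>c\<in>cells. gg \<rho> c = gg \<sigma> c}" using equiv_iff[OF assms r(1)] by simp
  next
    assume "\<rho> \<in> {\<rho>\<in>ucs. \<forall>c\<in>cells. gg \<rho> c = gg \<sigma> c}"
    then have r: "\<rho> \<in> ucs" "\<forall>c\<in>cells. gg \<rho> c = gg \<sigma> c" by auto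
    then have "seq_equiv qt cells \<sigma> \<rho>" using equiv_iff[OF assms r(1)] by simp
    then show "\<rho> \<in> cls \<sigma>" unfolding cls_def uc_rel_def using assms r(1) by simp
  qed
qed

lemma cls_self: "\<sigma> \<in> ucs \<Longrightarrow> \<sigma> \<in> cls \<sigma>"
  using cls_eq by simp

lemma cls_eq_iff: assumes "\<sigma> \<in> ucs" "\<sigma>' \<in> ucs"
  shows "cls \<sigma> = cls \<sigma>' \<longleftrightarrow> (\<forall>c\<in>cells. gg \<sigma> c = gg \<sigma>' c)"
proof
  assume "cls \<sigma> = cls \<sigma>'"
  then have "\<sigma> \<in> cls \<sigma>'" using cls_self[OF assms(1)] by simp
  then show "\<forall>c\<in>cells. gg \<sigma> c = gg \<sigma>' c" using cls_eq[OF assms(2)] by simp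
next
  assume "\<forall>c\<in>cells. gg \<sigma> c = gg \<sigma>' c"
  then show "cls \<sigma> = cls \<sigma>'" using cls_eq[OF assms(1)] cls_eq[OF assms(2)] by simp
qed

lemma carrier_UC: "carrier (UC qt cells :: ('i, 'a) bseq set monoid) = cls ` ucs"
  unfolding UC_def quotient_def cls_def by auto

lemma carrierE:
  assumes "X \<in> carrier (UC qt cells :: ('i, 'a) bseq set monoid)"
  obtains \<sigma> where "\<sigma> \<in> ucs" "X = cls \<sigma>"
  using assms unfolding carrier_UC by blast

lemma mem_class: assumes "X \<in> carrier (UC qt cells :: ('i, 'a) bseq set monoid)" "\<sigma> \<in> X"
  shows "\<sigma> \<in> ucs" "X = cls \<sigma>"
proof -
  obtain \<sigma>0 where s0: "\<sigma>0 \<in> ucs" "X = cls \<sigma>0" using assms(1) carrier_UC by auto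
  then show s: "\<sigma> \<in> ucs" using assms(2) cls_eq by auto
  have "\<forall>c\<in>cells. gg \<sigma> c = gg \<sigma>0 c" using s0 assms(2) cls_eq by auto
  then show "X = cls \<sigma>" using s0 cls_eq_iff[OF s s0(1)] by simp
qed

lemma mult_cls: assumes s: "\<sigma> \<in> ucs" and t: "\<tau> \<in> ucs"
  shows "cls \<tau> \<otimes>\<^bsub>(UC qt cells :: ('i, 'a) bseq set monoid)\<^esub> cls \<sigma> = cls (seq_then \<sigma> \<tau>)"
proof -
  have st: "seq_then \<sigma> \<tau> \<in> ucs" by (rule then_uc(1)[OF s t])
  have "{\<rho> \<in> ucs. \<exists>\<tau>'\<in>cls \<tau>. \<exists>\<sigma>'\<in>cls \<sigma>. seq_equiv qt cells \<rho> (seq_then \<sigma>' \<tau>')} = cls (seq_then \<sigma> \<tau>)"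
  proof (rule Set.set_eqI)
    fix \<rho>
    show "\<rho> \<in> {\<rho> \<in> ucs. \<exists>\<tau>'\<in>cls \<tau>. \<exists>\<sigma>'\<in>cls \<sigma>. seq_equiv qt cells \<rho> (seq_then \<sigma>' \<tau>')} \<longleftrightarrow> \<rho> \<in> cls (seq_then \<sigma> \<tau>)"
    proof
      assume "\<rho> \<in> {\<rho> \<in> ucs. \<exists>\<tau>'\<in>cls \<tau>. \<exists>\<sigma>'\<in>cls \<sigma>. seq_equiv qt cells \<rho> (seq_then \<sigma>' \<tau>')}"
      then obtain \<tau>' \<sigma>' where r: "\<rho> \<in> ucs" "\<tau>' \<in> cls \<tau>" "\<sigma>' \<in> cls \<sigma>" "seq_equiv qt cells \<rho> (seq_then \<sigma>' \<tau>')"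
        by blast
      have t': "\<tau>' \<in> ucs" "\<forall>c\<in>cells. gg \<tau>' c = gg \<tau> c" using r(2) cls_eq[OF t] by auto
      have s': "\<sigma>' \<in> ucs" "\<forall>c\<in>cells. gg \<sigma>' c = gg \<sigma> c" using r(3) cls_eq[OF s] by auto
      have "\<forall>c\<in>cells. gg \<rho> c = gg (seq_then \<sigma>' \<tau>') c"
        using r(4) equiv_iff[OF r(1) then_uc(1)[OF s'(1) t'(1)]] by simp
      then have "\<forall>c\<in>cells. gg \<rho> c = gg (seq_then \<sigma> \<tau>) c"
        using then_uc(2)[OF s'(1) t'(1)] then_uc(2)[OF s t] t' s' gg_cells[OF t] by simp
      then show "\<rho> \<in> cls (seq_then \<sigma> \<tau>)" using cls_eq[OF st] r(1) by simp
    next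
      assume "\<rho> \<in> cls (seq_then \<sigma> \<tau>)"
      then have r: "\<rho> \<in> ucs" "\<forall>c\<in>cells. gg \<rho> c = gg (seq_then \<sigma> \<tau>) c" using cls_eq[OF st] by auto
      then have "seq_equiv qt cells \<rho> (seq_then \<sigma> \<tau>)" using equiv_iff[OF r(1) st] by simp
      then show "\<rho> \<in> {\<rho> \<in> ucs. \<exists>\<tau>'\<in>cls \<tau>. \<exists>\<sigma>'\<in>cls \<sigma>. seq_equiv qt cells \<rho> (seq_then \<sigma>' \<tau>')}"
        using r(1) cls_self[OF s] cls_self[OF t] by blast
    qed
  qed
  then show ?thesis unfolding UC_def by simp
qed

lemma one_cls: "\<one>\<^bsub>(UC qt cells :: ('i, 'a) bseq set monoid)\<^esub> = cls empty_seq"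
proof -
  have "{\<rho> \<in> ucs. seq_equiv qt cells \<rho> empty_seq} = cls empty_seq"
    using cls_eq[OF empty_uc(1)] equiv_iff[OF _ empty_uc(1)] by auto
  then show ?thesis unfolding UC_def by simp
qed

lemma group_UC: "group (UC qt cells :: ('i, 'a) bseq set monoid)"
proof (rule groupI)
  let ?G = "UC qt cells :: ('i, 'a) bseq set monoid"
  show "x \<otimes>\<^bsub>?G\<^esub> y \<in> carrier ?G" if hx: "x \<in> carrier ?G" and hy: "y \<in> carrier ?G" for x y
  proof -
    obtain \<tau> where t: "\<tau> \<in> ucs" "x = cls \<tau>" using hx by (rule carrierE)
    obtain \<sigma> where s: "\<sigma> \<in> ucs" "y = cls \<sigma>" using hy by (rule carrierE)
    have "x \<otimes>\<^bsub>?G\<^esub> y = cls (seq_then \<sigma> \<tau>)" using mult_cls[OF s(1) t(1)] s t by simp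
    then show ?thesis unfolding carrier_UC using imageI[OF then_uc(1)[OF s(1) t(1)], of cls] by simp
  qed
  show "\<one>\<^bsub>?G\<^esub> \<in> carrier ?G" unfolding one_cls carrier_UC using imageI[OF empty_uc(1), of cls] .
  show "x \<otimes>\<^bsub>?G\<^esub> y \<otimes>\<^bsub>?G\<^esub> z = x \<otimes>\<^bsub>?G\<^esub> (y \<otimes>\<^bsub>?G\<^esub> z)"
    if hx: "x \<in> carrier ?G" and hy: "y \<in> carrier ?G" and hz: "z \<in> carrier ?G" for x y z
  proof -
    obtain a where "a \<in> ucs" "x = cls a" using hx by (rule carrierE)
    moreover obtain b where "b \<in> ucs" "y = cls b" using hy by (rule carrierE)
    moreover obtain c where "c \<in> ucs" "z = cls c" using hz by (rule carrierE)
    ultimately have abc: "a \<in> ucs" "x = cls a" "b \<in> ucs" "y = cls b" "c \<in> ucs" "z = cls c" by auto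
    have ba: "seq_then b a \<in> ucs" by (rule then_uc(1)[OF abc(3) abc(1)])
    have cb: "seq_then c b \<in> ucs" by (rule then_uc(1)[OF abc(5) abc(3)])
    have l: "x \<otimes>\<^bsub>?G\<^esub> y \<otimes>\<^bsub>?G\<^esub> z = cls (seq_then c (seq_then b a))"
      unfolding abc(2,4,6) mult_cls[OF abc(3) abc(1)] mult_cls[OF abc(5) ba] ..
    have r: "x \<otimes>\<^bsub>?G\<^esub> (y \<otimes>\<^bsub>?G\<^esub> z) = cls (seq_then (seq_then c b) a)"
      unfolding abc(2,4,6) mult_cls[OF abc(5) abc(3)] mult_cls[OF cb abc(1)] ..
    have "\<forall>d\<in>cells. gg (seq_then c (seq_then b a)) d = gg (seq_then (seq_then c b) a) d"
      using then_uc(2)[OF abc(5) ba] then_uc(2)[OF cb abc(1)] then_uc(2)[OF abc(3) abc(1)]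
        then_uc(2)[OF abc(5) abc(3)] gg_cells[OF abc(1)] by simp
    then have "cls (seq_then c (seq_then b a)) = cls (seq_then (seq_then c b) a)"
      using cls_eq_iff[OF then_uc(1)[OF abc(5) ba] then_uc(1)[OF cb abc(1)]] by simp
    then show ?thesis using l r by simp
  qed
  show "\<one>\<^bsub>?G\<^esub> \<otimes>\<^bsub>?G\<^esub> x = x" if hx: "x \<in> carrier ?G" for x
  proof -
    obtain a where a: "a \<in> ucs" "x = cls a" using hx by (rule carrierE)
    have "\<one>\<^bsub>?G\<^esub> \<otimes>\<^bsub>?G\<^esub> x = cls (seq_then a empty_seq)"
      unfolding one_cls a(2) mult_cls[OF a(1) empty_uc(1)] ..
    also have "\<dots> = cls a"
      using cls_eq_iff[OF then_uc(1)[OF a(1) empty_uc(1)] a(1)] then_uc(2)[OF a(1) empty_uc(1)] empty_uc(2) by simp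
    finally show ?thesis using a by simp
  qed
  show "\<exists>y\<in>carrier ?G. y \<otimes>\<^bsub>?G\<^esub> x = \<one>\<^bsub>?G\<^esub>" if hx: "x \<in> carrier ?G" for x
  proof -
    obtain a where a: "a \<in> ucs" "x = cls a" using hx by (rule carrierE)
    let ?E = "S24_exponent"
    have p: "pw a (?E - 1) \<in> ucs" using pw_uc[OF a(1)] by blast
    have "cls (pw a (?E - 1)) \<otimes>\<^bsub>?G\<^esub> x = cls (seq_then a (pw a (?E - 1)))"
      unfolding a(2) mult_cls[OF a(1) p] ..
    also have "\<dots> = cls (pw a ?E)"
      using S24_pos by (metis Suc_diff_1 pw.simps(2))
    also have "\<dots> = cls empty_seq"
    proof -
      have "\<forall>c\<in>cells. gg (pw a ?E) c = gg empty_seq c"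
        using pw_uc[OF a(1), of ?E] gg_exp[OF a(1)] empty_uc(2) by simp
      then show ?thesis using cls_eq_iff[OF conjunct1[OF pw_uc[OF a(1)]] empty_uc(1)] by simp
    qed
    finally have "cls (pw a (?E - 1)) \<otimes>\<^bsub>?G\<^esub> x = \<one>\<^bsub>?G\<^esub>" unfolding one_cls .
    moreover have "cls (pw a (?E - 1)) \<in> carrier ?G" unfolding carrier_UC using imageI[OF p, of cls] .
    ultimately show ?thesis by blast
  qed
qed

lemma pow_cls: assumes a: "a \<in> ucs"
  shows "cls a [^]\<^bsub>(UC qt cells :: ('i, 'a) bseq set monoid)\<^esub> (n::nat) = cls (pw a n)"
proof (induction n)
  case 0 then show ?case using one_cls by simp
next
  case (Suc n)
  then show ?case using mult_cls[OF a] pw_uc[OF a] by simp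
qed

lemma pwE_one: assumes a: "a \<in> ucs"
  shows "cls (pw a S24_exponent) = \<one>\<^bsub>(UC qt cells :: ('i, 'a) bseq set monoid)\<^esub>"
proof -
  have "\<forall>c\<in>cells. gg (pw a S24_exponent) c = gg empty_seq c"
    using pw_uc[OF a, of S24_exponent] gg_exp[OF a] empty_uc(2) by simp
  then show ?thesis unfolding one_cls using cls_eq_iff[OF conjunct1[OF pw_uc[OF a]] empty_uc(1)] by simp
qed

lemma inv_cls: assumes a: "a \<in> ucs"
  shows "inv\<^bsub>(UC qt cells :: ('i, 'a) bseq set monoid)\<^esub> (cls a) = cls (pw a (S24_exponent - 1))"
proof -
  let ?G = "UC qt cells :: ('i, 'a) bseq set monoid"
  let ?E = "S24_exponent"
  have p: "pw a (?E - 1) \<in> ucs" using pw_uc[OF a] by blast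
  have "cls (pw a (?E - 1)) \<otimes>\<^bsub>?G\<^esub> cls a = cls (seq_then a (pw a (?E - 1)))"
    unfolding mult_cls[OF a p] ..
  also have "\<dots> = cls (pw a ?E)"
    using S24_pos by (metis Suc_diff_1 pw.simps(2))
  also have "\<dots> = \<one>\<^bsub>?G\<^esub>" by (rule pwE_one[OF a])
  finally have e: "cls (pw a (?E - 1)) \<otimes>\<^bsub>?G\<^esub> cls a = \<one>\<^bsub>?G\<^esub>" .
  have c1: "cls a \<in> carrier ?G" unfolding carrier_UC using imageI[OF a, of cls] .
  have c2: "cls (pw a (?E - 1)) \<in> carrier ?G" unfolding carrier_UC using imageI[OF p, of cls] .
  show ?thesis by (rule group.inv_equality[OF group_UC e c1 c2])
qed

lemma claim: "UC_claim qt cells TYPE('i)"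
  unfolding UC_claim_def
proof (intro conjI allI impI ballI)
  let ?G = "UC qt cells :: ('i, 'a) bseq set monoid"
  let ?E = "S24_exponent"
  show "seq_then \<sigma> \<tau> \<in> ucs" if "\<sigma> \<in> ucs" "\<tau> \<in> ucs" for \<sigma> \<tau>
    using then_uc(1)[OF that] .
  show "seq_equiv qt cells (seq_then \<sigma> \<tau>) (seq_then \<sigma>' \<tau>')"
    if h: "\<sigma> \<in> ucs" "\<sigma>' \<in> ucs" "\<tau> \<in> ucs" "\<tau>' \<in> ucs" "seq_equiv qt cells \<sigma> \<sigma>'" "seq_equiv qt cells \<tau> \<tau>'"
    for \<sigma> \<sigma>' \<tau> \<tau>'
  proof -
    have e1: "\<forall>c\<in>cells. gg \<sigma> c = gg \<sigma>' c" using equiv_iff[OF h(1,2)] h(5) by simp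
    have e2: "\<forall>c\<in>cells. gg \<tau> c = gg \<tau>' c" using equiv_iff[OF h(3,4)] h(6) by simp
    have "\<forall>c\<in>cells. gg (seq_then \<sigma> \<tau>) c = gg (seq_then \<sigma>' \<tau>') c"
      using then_uc(2)[OF h(1,3)] then_uc(2)[OF h(2,4)] e1 e2 gg_cells[OF h(3)] by simp
    then show ?thesis using equiv_iff[OF then_uc(1)[OF h(1,3)] then_uc(1)[OF h(2,4)]] by simp
  qed
  show grp: "group ?G" by (rule group_UC)
  show "subgroup (GL_in_UC qt cells) ?G"
  proof (rule group.subgroupI[OF grp])
    show "GL_in_UC qt cells \<subseteq> carrier ?G" unfolding GL_in_UC_def by blast
    have fe: "finite (Field (fst (empty_seq :: ('i,'a) bseq)))" by (simp add: empty_seq_def)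
    have ce: "cls empty_seq \<in> carrier ?G" unfolding carrier_UC using imageI[OF empty_uc(1), of cls] .
    have "\<exists>sq\<in>cls empty_seq. finite (Field (fst sq))"
      using fe cls_self[OF empty_uc(1)] by (rule bexI[of _ empty_seq])
    with ce have "cls empty_seq \<in> carrier ?G \<and> (\<exists>sq\<in>cls empty_seq. finite (Field (fst sq)))"
      by (rule conjI)
    then have "cls empty_seq \<in> GL_in_UC qt cells"
      unfolding GL_in_UC_def by (rule CollectI)
    then show "GL_in_UC qt cells \<noteq> ({} :: ('i, 'a) bseq set set)"
      by (intro ex_in_conv[THEN iffD1] exI[of _ "cls empty_seq"])
    show "inv\<^bsub>?G\<^esub> X \<in> GL_in_UC qt cells" if X: "X \<in> GL_in_UC qt cells" for X
    proof -
      obtain sq where sq: "sq \<in> X" "finite (Field (fst sq))" "X \<in> carrier ?G"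
        using X unfolding GL_in_UC_def by auto
      have u: "sq \<in> ucs" and Xe: "X = cls sq" using mem_class[OF sq(3) sq(1)] by auto
      have p: "pw sq (?E - 1) \<in> ucs" using pw_uc[OF u] by blast
      have ie: "inv\<^bsub>?G\<^esub> X = cls (pw sq (?E - 1))" unfolding Xe by (rule inv_cls[OF u])
      have c: "cls (pw sq (?E - 1)) \<in> carrier ?G" unfolding carrier_UC using imageI[OF p, of cls] .
      have "\<exists>q\<in>cls (pw sq (?E - 1)). finite (Field (fst q))"
        using pw_fin[OF sq(2)] cls_self[OF p] by (rule bexI[of _ "pw sq (?E - 1)"])
      with c have "cls (pw sq (?E - 1)) \<in> carrier ?G \<and> (\<exists>q\<in>cls (pw sq (?E - 1)). finite (Field (fst q)))"
        by (rule conjI)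
      then have "cls (pw sq (?E - 1)) \<in> GL_in_UC qt cells"
        unfolding GL_in_UC_def by (rule CollectI)
      then show ?thesis using ie by simp
    qed
    show "X \<otimes>\<^bsub>?G\<^esub> Y \<in> GL_in_UC qt cells" if X: "X \<in> GL_in_UC qt cells" and Y: "Y \<in> GL_in_UC qt cells" for X Y
    proof -
      obtain t where t: "t \<in> X" "finite (Field (fst t))" "X \<in> carrier ?G"
        using X unfolding GL_in_UC_def by auto
      obtain s where s: "s \<in> Y" "finite (Field (fst s))" "Y \<in> carrier ?G"
        using Y unfolding GL_in_UC_def by auto
      have tu: "t \<in> ucs" and Xe: "X = cls t" using mem_class[OF t(3) t(1)] by auto
      have su: "s \<in> ucs" and Ye: "Y = cls s" using mem_class[OF s(3) s(1)] by auto
      have st: "seq_then s t \<in> ucs" by (rule then_uc(1)[OF su tu])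
      have me: "X \<otimes>\<^bsub>?G\<^esub> Y = cls (seq_then s t)" unfolding Xe Ye by (rule mult_cls[OF su tu])
      have c: "cls (seq_then s t) \<in> carrier ?G" unfolding carrier_UC using imageI[OF st, of cls] .
      have "\<exists>q\<in>cls (seq_then s t). finite (Field (fst q))"
        using finite_seq_then[OF inj_emb s(2) t(2)] cls_self[OF st] by (rule bexI[of _ "seq_then s t"])
      with c have "cls (seq_then s t) \<in> carrier ?G \<and> (\<exists>q\<in>cls (seq_then s t). finite (Field (fst q)))"
        by (rule conjI)
      then have "cls (seq_then s t) \<in> GL_in_UC qt cells"
        unfolding GL_in_UC_def by (rule CollectI)
      then show ?thesis using me by simp
    qed
  qed
  fix X assume X: "X \<in> carrier ?G"
  obtain a where a: "a \<in> ucs" "X = cls a" using X by (rule carrierE)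
  have "X [^]\<^bsub>?G\<^esub> ?E = \<one>\<^bsub>?G\<^esub>" unfolding a(2) pow_cls[OF a(1)] by (rule pwE_one[OF a(1)])
  then have d: "group.ord ?G X dvd ?E" using group.pow_eq_id[OF grp X] by simp
  show "group.ord ?G X \<le> ?E" using dvd_imp_le[OF d S24_pos] .
  show "0 < group.ord ?G X" using d S24_pos by (cases "group.ord ?G X") auto
qed

end

section \<open>Concrete rotations\<close>

type_synonym rot = "(axis \<times> bool) \<times> (axis \<times> bool) \<times> (axis \<times> bool)"

definition sg :: "bool \<Rightarrow> 'a ext \<Rightarrow> 'a ext" where "sg b v = (if b then eneg v else v)"

fun getr :: "rot \<Rightarrow> axis \<Rightarrow> axis \<times> bool" where
  "getr (r1, r2, r3) AX = r1" | "getr (r1, r2, r3) AY = r2" | "getr (r1, r2, r3) AZ = r3"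

definition rapp :: "rot \<Rightarrow> 'a point \<Rightarrow> 'a point" where
  "rapp R p = (sg (snd (getr R AX)) (coord p (fst (getr R AX))),
               sg (snd (getr R AY)) (coord p (fst (getr R AY))),
               sg (snd (getr R AZ)) (coord p (fst (getr R AZ))))"

definition axm :: "rot \<Rightarrow> axis \<Rightarrow> axis" where
  "axm R j = (if fst (getr R AX) = j then AX else if fst (getr R AY) = j then AY else AZ)"

definition rapp_e :: "rot \<Rightarrow> 'a point \<times> axis \<Rightarrow> 'a point \<times> axis" where
  "rapp_e R c = (rapp R (fst c), axm R (snd c))"

definition compc :: "rot \<Rightarrow> rot \<Rightarrow> axis \<Rightarrow> axis \<times> bool" where
  "compc G R i = (fst (getr R (fst (getr G i))), snd (getr G i) \<noteq> snd (getr R (fst (getr G i))))"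

definition rcomp :: "rot \<Rightarrow> rot \<Rightarrow> rot" where
  "rcomp G R = (compc G R AX, compc G R AY, compc G R AZ)"

fun gen :: "axis \<Rightarrow> rot" where
  "gen AX = ((AX,False),(AZ,True),(AY,False))"
| "gen AY = ((AZ,False),(AY,False),(AX,True))"
| "gen AZ = ((AY,True),(AX,False),(AZ,False))"

definition rots :: "rot list" where
  "rots = [((AX,False),(AY,False),(AZ,False)), ((AX,False),(AY,True),(AZ,True)), ((AX,True),(AY,False),(AZ,True)), ((AX,True),(AY,True),(AZ,False)), ((AX,False),(AZ,False),(AY,True)), ((AX,False),(AZ,True),(AY,False)), ((AX,True),(AZ,False),(AY,False)), ((AX,True),(AZ,True),(AY,True)), ((AY,False),(AX,False),(AZ,True)), ((AY,False),(AX,True),(AZ,False)), ((AY,True),(AX,False),(AZ,False)), ((AY,True),(AX,True),(AZ,True)), ((AY,False),(AZ,False),(AX,False)), ((AY,False),(AZ,True),(AX,True)), ((AY,True),(AZ,False),(AX,True)), ((AY,True),(AZ,True),(AX,False)), ((AZ,False),(AX,False),(AY,False)), ((AZ,False),(AX,True),(AY,True)), ((AZ,True),(AX,False),(AY,True)), ((AZ,True),(AX,True),(AY,False)), ((AZ,False),(AY,False),(AX,True)), ((AZ,False),(AY,True),(AX,False)), ((AZ,True),(AY,False),(AX,False)), ((AZ,True),(AY,True),(AX,True))]"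

lemma eneg_eneg[simp]: "eneg (eneg a) = a"
  by (cases a) auto

lemma sg_sg: "sg b (sg b' v) = sg (b \<noteq> b') v"
  unfolding sg_def by auto

lemma coord_rapp: "coord (rapp R p) a = sg (snd (getr R a)) (coord p (fst (getr R a)))"
  unfolding rapp_def by (cases a) simp_all

lemma getr_comp: "getr (rcomp G R) i = compc G R i"
  unfolding rcomp_def by (cases i) simp_all

lemma point_eqI: "coord p AX = coord q AX \<Longrightarrow> coord p AY = coord q AY \<Longrightarrow> coord p AZ = coord q AZ \<Longrightarrow> p = q"
  by (cases p; cases q) simp

lemma rapp_comp: "rapp (rcomp G R) p = rapp G (rapp R p)"
proof -
  have c: "coord (rapp (rcomp G R) p) i = coord (rapp G (rapp R p)) i" for i
    unfolding coord_rapp getr_comp compc_def by (simp add: sg_sg)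
  show ?thesis by (rule point_eqI) (rule c)+
qed

lemma rots_closed_all: "\<forall>R\<in>set rots. rcomp (gen i) R \<in> set rots"
  by (cases i) (simp_all add: rots_def rcomp_def compc_def)

lemma rots_closed: "R \<in> set rots \<Longrightarrow> rcomp (gen i) R \<in> set rots"
  using rots_closed_all by blast

lemma axm_comp_all: "\<forall>R\<in>set rots. axm (rcomp (gen i) R) j = axm (gen i) (axm R j)"
  by (cases i; cases j) (simp_all add: rots_def rcomp_def compc_def axm_def)

lemma axm_comp: "R \<in> set rots \<Longrightarrow> axm (rcomp (gen i) R) j = axm (gen i) (axm R j)"
  using axm_comp_all by blast

lemma rapp_e_comp: "R \<in> set rots \<Longrightarrow> rapp_e (rcomp (gen i) R) c = rapp_e (gen i) (rapp_e R c)"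
  unfolding rapp_e_def by (simp add: rapp_comp axm_comp)

lemma id_rots: "((AX,False),(AY,False),(AZ,False)) \<in> set rots"
  by (simp add: rots_def)

lemma rapp_id: "rapp ((AX,False),(AY,False),(AZ,False)) p = p"
  unfolding rapp_def sg_def by (cases p) simp

lemma rapp_e_id: "rapp_e ((AX,False),(AY,False),(AZ,False)) c = c"
proof -
  obtain p j where c: "c = (p, j)" by (cases c)
  show ?thesis unfolding rapp_e_def axm_def c by (cases j) (simp_all add: rapp_id)
qed

lemma length_rots: "length rots = 24"
  by (simp add: rots_def)

lemma qturn_pt_cases: "qturn_pt i \<alpha> p = p \<or> qturn_pt i \<alpha> p = rapp (gen i) p"
  by (cases i; cases p) (auto simp: rapp_def sg_def)

lemma qturn_edged_cases: "qturn_edged i \<alpha> c = c \<or> qturn_edged i \<alpha> c = rapp_e (gen i) c"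
proof -
  obtain p j where c: "c = (p, j)" by (cases c)
  have "carry_axis i j = axm (gen i) j" by (cases i; cases j) (simp_all add: axm_def)
  moreover have "coord p i = \<alpha> \<Longrightarrow> qturn_pt i \<alpha> p = rapp (gen i) p"
    by (cases i; cases p) (auto simp: rapp_def sg_def)
  ultimately show ?thesis unfolding qturn_edged_def c rapp_e_def by auto
qed

lemma orbit_bound:
  fixes qt :: "axis \<Rightarrow> 'a ext \<Rightarrow> 'c \<Rightarrow> 'c" and ra :: "rot \<Rightarrow> 'c \<Rightarrow> 'c"
  assumes cases: "\<And>i \<alpha> x. qt i \<alpha> x = x \<or> qt i \<alpha> x = ra (gen i) x"
    and cmp: "\<And>R i x. R \<in> set rots \<Longrightarrow> ra (rcomp (gen i) R) x = ra (gen i) (ra R x)"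
    and idr: "\<And>x. ra ((AX,False),(AY,False),(AZ,False)) x = x"
  shows "finite {d. reach qt c d}" "card {d. reach qt c d} \<le> 24"
proof -
  have sub: "{d. reach qt c d} \<subseteq> (\<lambda>R. ra R c) ` set rots"
  proof
    fix d assume "d \<in> {d. reach qt c d}"
    then have "reach qt c d" by simp
    then show "d \<in> (\<lambda>R. ra R c) ` set rots"
    proof (induction rule: reach.induct)
      case (reach_refl c)
      show ?case using id_rots idr[of c] by (metis image_eqI)
    next
      case (reach_step c d i \<alpha>)
      then obtain R where R: "R \<in> set rots" "d = ra R c" by blast
      show ?case
      proof (cases "qt i \<alpha> d = d")
        case True then show ?thesis using reach_step.IH by simp
      next
        case False
        then have "qt i \<alpha> d = ra (gen i) d" using cases by metis
        also have "\<dots> = ra (rcomp (gen i) R) c" using cmp[OF R(1)] R(2) by simp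
        finally show ?thesis using rots_closed[OF R(1)] by (metis image_eqI)
      qed
    qed
  qed
  have f: "finite ((\<lambda>R. ra R c) ` set rots)" by simp
  show "finite {d. reach qt c d}" using finite_subset[OF sub f] .
  have "card {d. reach qt c d} \<le> card ((\<lambda>R. ra R c) ` set rots)" by (rule card_mono[OF f sub])
  also have "\<dots> \<le> card (set rots)" by (rule card_image_le) simp
  also have "\<dots> \<le> length rots" by (rule card_length)
  finally show "card {d. reach qt c d} \<le> 24" using length_rots by simp
qed

section \<open>The two cubes\<close>

lemma card_axis: "card {i::axis. P i} = of_bool (P AX) + of_bool (P AY) + of_bool (P AZ)"
proof -
  have e: "{i. P i} = (if P AX then {AX} else {}) \<union> (if P AY then {AY} else {}) \<union> (if P AZ then {AZ} else {})"
  proof (rule Set.set_eqI)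
    fix x show "x \<in> {i. P i} \<longleftrightarrow> x \<in> (if P AX then {AX} else {}) \<union> (if P AY then {AY} else {}) \<union> (if P AZ then {AZ} else {})"
      by (cases x) auto
  qed
  show ?thesis unfolding e by (cases "P AX"; cases "P AY"; cases "P AZ") simp_all
qed

lemma is_inf_eneg[simp]: "is_inf (eneg a) = is_inf a"
  unfolding is_inf_def by (cases a) auto

lemma edgeless_iff: "(x, y, z) \<in> edgeless_cells \<longleftrightarrow>
    of_bool (is_inf x) + of_bool (is_inf y) + of_bool (is_inf z) = (1::nat)"
  unfolding edgeless_cells_def by (simp add: card_axis)

lemma cube_pt: "cube (qturn_pt :: axis \<Rightarrow> 'a ext \<Rightarrow> 'a point \<Rightarrow> 'a point) edgeless_cells"
proof
  fix i :: axis and \<alpha> :: "'a ext" and x :: "'a point"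
  show "(qturn_pt i \<alpha> ^^ 4) x = x"
    by (cases i; cases x) (simp_all add: numeral_eq_Suc)
  show "x \<in> edgeless_cells \<Longrightarrow> qturn_pt i \<alpha> x \<in> edgeless_cells"
    by (cases i; cases x) (auto simp: edgeless_iff)
next
  fix c :: "'a point"
  show "finite {d. reach qturn_pt c d}" "card {d. reach qturn_pt c d} \<le> 24"
    by (rule orbit_bound[where ra = rapp, OF qturn_pt_cases rapp_comp rapp_id])+
qed

lemma edged_iff: "(p, j) \<in> edged_cells \<longleftrightarrow> is_inf (coord p j)"
  unfolding edged_cells_def by simp

lemma cube_edged: "cube (qturn_edged :: axis \<Rightarrow> 'a ext \<Rightarrow> 'a point \<times> axis \<Rightarrow> 'a point \<times> axis) edged_cells"
proof
  fix i :: axis and \<alpha> :: "'a ext" and x :: "'a point \<times> axis"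
  obtain p j where xe: "x = (p, j)" by (cases x)
  obtain a b c where pe: "p = (a, b, c)" by (cases p)
  show "(qturn_edged i \<alpha> ^^ 4) x = x"
    unfolding xe pe by (cases i; cases j) (simp_all add: numeral_eq_Suc qturn_edged_def)
  show "x \<in> edged_cells \<Longrightarrow> qturn_edged i \<alpha> x \<in> edged_cells"
    unfolding xe pe by (cases i; cases j) (auto simp: edged_iff qturn_edged_def)
next
  fix c :: "'a point \<times> axis"
  show "finite {d. reach qturn_edged c d}"
    by (rule orbit_bound(1)[where ra = rapp_e, OF qturn_edged_cases rapp_e_comp rapp_e_id])
  show "card {d. reach qturn_edged c d} \<le> 24"
    by (rule orbit_bound(2)[where ra = rapp_e, OF qturn_edged_cases rapp_e_comp rapp_e_id])
qed

context
  includes cardinal_syntax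
begin

lemma inj_emb_inf:
  assumes "infinite (UNIV :: 'i set)"
  shows "inj (emb :: 'i + 'i \<Rightarrow> 'i)"
proof -
  have l: "|UNIV :: 'i set| \<le>o |UNIV :: 'i set|" by (rule card_of_mono1) simp
  have "|(UNIV :: 'i set) <+> (UNIV :: 'i set)| =o |UNIV :: 'i set|"
    by (rule card_of_Plus_infinite1[OF assms l])
  then have "|(UNIV :: 'i set) <+> (UNIV :: 'i set)| \<le>o |UNIV :: 'i set|"
    by (rule ordIso_iff_ordLeq[THEN iffD1, THEN conjunct1])
  then have "\<exists>f :: 'i + 'i \<Rightarrow> 'i. inj_on f ((UNIV :: 'i set) <+> (UNIV :: 'i set)) \<and> f ` ((UNIV :: 'i set) <+> (UNIV :: 'i set)) \<subseteq> UNIV"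
    by (rule card_of_ordLeq[THEN iffD2])
  then obtain f :: "'i + 'i \<Rightarrow> 'i" where "inj_on f ((UNIV :: 'i set) <+> (UNIV :: 'i set))"
    by (elim exE conjE)
  then have "inj f" by simp
  then have "\<exists>h :: 'i + 'i \<Rightarrow> 'i. inj h" by blast
  then show ?thesis unfolding emb_def by (rule someI_ex)
qed

end

theorem lemma3p8:
  assumes "infinite (UNIV :: 'a set)"
      and "infinite (UNIV :: 'i set)"
  shows "UC_claim (qturn_pt :: axis \<Rightarrow> 'a ext \<Rightarrow> 'a point \<Rightarrow> 'a point) edgeless_cells TYPE('i)
       \<and> UC_claim (qturn_edged :: axis \<Rightarrow> 'a ext \<Rightarrow> 'a point \<times> axis \<Rightarrow> 'a point \<times> axis) edged_cells TYPE('i)"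
proof
  have inj: "inj (emb :: 'i + 'i \<Rightarrow> 'i)" by (rule inj_emb_inf[OF assms(2)])
  interpret A: cube_i "qturn_pt :: axis \<Rightarrow> 'a ext \<Rightarrow> 'a point \<Rightarrow> 'a point" edgeless_cells "TYPE('i)"
    by (intro cube_i.intro cube_pt cube_i_axioms.intro inj)
  show "UC_claim (qturn_pt :: axis \<Rightarrow> 'a ext \<Rightarrow> 'a point \<Rightarrow> 'a point) edgeless_cells TYPE('i)"
    by (rule A.claim)
  interpret B: cube_i "qturn_edged :: axis \<Rightarrow> 'a ext \<Rightarrow> 'a point \<times> axis \<Rightarrow> 'a point \<times> axis" edged_cells "TYPE('i)"
    by (intro cube_i.intro cube_edged cube_i_axioms.intro inj)
  show "UC_claim (qturn_edged :: axis \<Rightarrow> 'a ext \<Rightarrow> 'a point \<times> axis \<Rightarrow> 'a point \<times> axis) edged_cells TYPE('i)"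
    by (rule B.claim)
qed

end
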